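(* Let $m\ge2$ and let $a_1,a_2,b_1,b_2,b_3,c_1,\dots,c_{2m}$ be real with $a_1>a_2$, $b_1,b_2,b_3$ pairwise distinct, $c_1>c_2>\dots>c_{2m}$, and $ma_1+ma_2=b_1+(m-1)b_2+mb_3+\sum_{i=1}^{2m}c_i$. Let $\langle\cdot,\cdot\rangle$ be the form on $\mathbb{R}^{2m}$ defined in the context (assumed well defined). Then $\langle\cdot,\cdot\rangle$ is sign-definite if and only if one of the following six systems holds: (1) $b_1>b_3>b_2$; $p^{31}_{m-1}>0>p^{31}_m$; $p^{32}_{2m-1}>0>p^{32}_{2m}$; $q_{i,2m-1-i}>0>q_{i,2m-i}$ for $i=1,\dots,m-1$. (2) $b_1>b_2>b_3$; $0>p^{31}_1$; $p^{32}_m>0>p^{32}_{m+1}$; $q_{i,2m-i}>0>q_{i,2m+1-i}$ for $i=1,\dots,m-1$; $0>q_{m,m+1}$. (3) $b_2>b_1>b_3$; $0>p^{31}_1$; $p^{32}_m>0>p^{32}_{m+1}$; $q_{i,2m+1-i}>0>q_{i+1,2m+1-i}$ for $i=1,\dots,m-1$; $q_{m,m+1}>0$. (4) $b_2>b_3>b_1$; $p^{31}_1>0>p^{31}_2$; $p^{32}_{m+1}>0>p^{32}_{m+2}$; $q_{i,2m+2-i}>0>q_{i+1,2m+2-i}$ for $i=2,\dots,m$. (5) $b_3>b_2>b_1$; $p^{31}_m>0>p^{31}_{m+1}$; $p^{32}_{2m}>0$; $q_{i,2m+1-i}>0>q_{i+1,2m+1-i}$ for $i=1,\dots,m-1$;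 $q_{m,m+1}>0$. (6) $b_3>b_1>b_2$; $p^{31}_m>0>p^{31}_{m+1}$; $p^{32}_{2m}>0$; $q_{i,2m-i}>0>q_{i,2m+1-i}$ for $i=1,\dots,m-1$; $0>q_{m,m+1}$. If $\epsilon\langle\cdot,\cdot\rangle$ is positive-definite for $\epsilon=\pm1$, then $\epsilon=\mathrm{sign}((b_1-b_2)(b_1-b_3))$. In each case, the inequalities between $b_1,b_2,b_3$ are implied by the other inequalities of that case.
   Context: Notation: $p_i^{jk}=c_i+b_j-a_k$, $q_{ij}=c_i+c_j+b_2+b_3-a_1-a_2$; empty products are $1$. ${\bf C}$ is the $2m\times2m$ lower-triangular matrix with $C_{11}=c_{2m}$, $C_{1+i,1+i}=c_{2m-i}$ ($1\le i\le m-1$), $C_{m+i,m+i}=c_{m+1-i}$ ($1\le i\le m$), $C_{1+i,1}=-\frac{\prod_{k=1}^i q_{k,2m-i}}{\prod_{k=2m+1-i}^{2m-1}(c_{2m-i}-c_k)}$ ($1\le i\le m-1$), $C_{m+i,1}=-p^{32}_{m+1-i}\frac{\prod_{k=m+1}^{m-1+i}q_{m+1-i,k}}{\prod_{k=m+2-i}^m(c_{m+1-i}-c_k)}$ ($1\le i\le m$), $C_{m+i,1+j}=(-1)^{m+1-j}p^{32}_{m+1-i}\frac{\prod_{k=m+1,k\ne2m-j}^{m-1+i}q_{m+1-i,k}\prod_{k=j+1,k\ne m+1-i}^m q_{k,2m-j}}{\prod_{k=m+2-i}^m(c_{m+1-i}-c_k)\prod_{k=m+1}^{2m-1-j}(c_k-c_{2m-j})}$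 ($1\le i\le m$, $1\le j\le m-1$), all other entries $0$. For $i=1,\dots,2m$, ${\bf v}_i$ is the eigenvector of ${\bf C}$ with eigenvalue $c_i$ whose first $2m-i$ coordinates vanish and whose $(2m+1-i)$-th coordinate is $1$. The form is defined by $\langle{\bf v}_i,{\bf v}_j\rangle=0$ ($i\ne j$) and $\langle{\bf v}_i,{\bf v}_i\rangle=\frac{\prod_{k=i+1}^{2m}(c_i-c_k)}{\prod_{k=1}^{i-1}(c_i-c_k)}\cdot\frac{\prod_{k=2m+1-i,k\ne i}^{2m}q_{ik}}{\prod_{k=1,k\ne i}^{2m-i}q_{ik}}$ times $p^{31}_i/p^{32}_i$ if $i\le m$ and times $p^{31}_ip^{32}_i$ if $i>m$; it is well defined when no denominator vanishes. Sign-definite means positive-definite or negative-definite. *)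

theory Defs
  imports Main "HOL.Real"
begin

(* Coordinates are 1-indexed: vectors of R^{2m} are functions nat => real vanishing
   outside {1..2m}; c is indexed 1..2m. *)

definition p31 :: "real \<Rightarrow> real \<Rightarrow> (nat \<Rightarrow> real) \<Rightarrow> nat \<Rightarrow> real" where
  "p31 a1 b3 c i = c i + b3 - a1"

definition p32 :: "real \<Rightarrow> real \<Rightarrow> (nat \<Rightarrow> real) \<Rightarrow> nat \<Rightarrow> real" where
  "p32 a2 b3 c i = c i + b3 - a2"

definition qq :: "real \<Rightarrow> real \<Rightarrow> real \<Rightarrow> real \<Rightarrow> (nat \<Rightarrow> real) \<Rightarrow> nat \<Rightarrow> nat \<Rightarrow> real" where
  "qq a1 a2 b2 b3 c i j = c i + c j + b2 + b3 - a1 - a2"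

definition Cup :: "nat \<Rightarrow> real \<Rightarrow> real \<Rightarrow> real \<Rightarrow> real \<Rightarrow> (nat \<Rightarrow> real) \<Rightarrow> nat \<Rightarrow> real" where
  "Cup m a1 a2 b2 b3 c i =
     - (\<Prod>k\<in>{1..i}. qq a1 a2 b2 b3 c k (2*m-i))
       / (\<Prod>k\<in>{2*m+1-i..2*m-1}. (c (2*m-i) - c k))"

definition Clow :: "nat \<Rightarrow> real \<Rightarrow> real \<Rightarrow> real \<Rightarrow> real \<Rightarrow> (nat \<Rightarrow> real) \<Rightarrow> nat \<Rightarrow> real" where
  "Clow m a1 a2 b2 b3 c i =
     - p32 a2 b3 c (m+1-i) * (\<Prod>k\<in>{m+1..m-1+i}. qq a1 a2 b2 b3 c (m+1-i) k)
       / (\<Prod>k\<in>{m+2-i..m}. (c (m+1-i) - c k))"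

definition Coff :: "nat \<Rightarrow> real \<Rightarrow> real \<Rightarrow> real \<Rightarrow> real \<Rightarrow> (nat \<Rightarrow> real) \<Rightarrow> nat \<Rightarrow> nat \<Rightarrow> real" where
  "Coff m a1 a2 b2 b3 c i j =
     (-1) ^ (m+1-j) * p32 a2 b3 c (m+1-i)
     * (\<Prod>k\<in>{m+1..m-1+i} - {2*m-j}. qq a1 a2 b2 b3 c (m+1-i) k)
     * (\<Prod>k\<in>{j+1..m} - {m+1-i}. qq a1 a2 b2 b3 c k (2*m-j))
     / ((\<Prod>k\<in>{m+2-i..m}. (c (m+1-i) - c k)) * (\<Prod>k\<in>{m+1..2*m-1-j}. (c k - c (2*m-j))))"

definition Cmat :: "nat \<Rightarrow> real \<Rightarrow> real \<Rightarrow> real \<Rightarrow> real \<Rightarrow> (nat \<Rightarrow> real) \<Rightarrow> nat \<Rightarrow> nat \<Rightarrow> real" where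
  "Cmat m a1 a2 b2 b3 c r s =
     (if r = 1 \<and> s = 1 then c (2*m)
      else if 2 \<le> r \<and> r \<le> m \<and> s = r then c (2*m - (r-1))
      else if m+1 \<le> r \<and> r \<le> 2*m \<and> s = r then c (m+1 - (r-m))
      else if 2 \<le> r \<and> r \<le> m \<and> s = 1 then Cup m a1 a2 b2 b3 c (r-1)
      else if m+1 \<le> r \<and> r \<le> 2*m \<and> s = 1 then Clow m a1 a2 b2 b3 c (r-m)
      else if m+1 \<le> r \<and> r \<le> 2*m \<and> 2 \<le> s \<and> s \<le> m then Coff m a1 a2 b2 b3 c (r-m) (s-1)
      else 0)"

definition Vsp :: "nat \<Rightarrow> (nat \<Rightarrow> real) set" where
  "Vsp m = {x. \<forall>k. k \<notin> {1..2*m} \<longrightarrow> x k = 0}"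

definition evec :: "nat \<Rightarrow> real \<Rightarrow> real \<Rightarrow> real \<Rightarrow> real \<Rightarrow> (nat \<Rightarrow> real) \<Rightarrow> nat \<Rightarrow> (nat \<Rightarrow> real)" where
  "evec m a1 a2 b2 b3 c i = (THE v. v \<in> Vsp m
      \<and> (\<forall>r\<in>{1..2*m}. (\<Sum>s=1..2*m. Cmat m a1 a2 b2 b3 c r s * v s) = c i * v r)
      \<and> (\<forall>r\<in>{1..2*m-i}. v r = 0) \<and> v (2*m+1-i) = 1)"

definition dval :: "nat \<Rightarrow> real \<Rightarrow> real \<Rightarrow> real \<Rightarrow> real \<Rightarrow> (nat \<Rightarrow> real) \<Rightarrow> nat \<Rightarrow> real" where
  "dval m a1 a2 b2 b3 c i =
     (\<Prod>k\<in>{i+1..2*m}. (c i - c k)) / (\<Prod>k\<in>{1..i-1}. (c i - c k))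
     * ((\<Prod>k\<in>{2*m+1-i..2*m} - {i}. qq a1 a2 b2 b3 c i k)
        / (\<Prod>k\<in>{1..2*m-i} - {i}. qq a1 a2 b2 b3 c i k))
     * (if i \<le> m then p31 a1 b3 c i / p32 a2 b3 c i else p31 a1 b3 c i * p32 a2 b3 c i)"

definition form_well_defined :: "nat \<Rightarrow> real \<Rightarrow> real \<Rightarrow> real \<Rightarrow> real \<Rightarrow> (nat \<Rightarrow> real) \<Rightarrow> bool" where
  "form_well_defined m a1 a2 b2 b3 c \<longleftrightarrow>
     (\<forall>i\<in>{1..2*m}. \<forall>k\<in>{1..2*m}. k \<noteq> i \<longrightarrow> c i - c k \<noteq> 0)
     \<and> (\<forall>i\<in>{1..2*m}. \<forall>k\<in>{1..2*m-i} - {i}. qq a1 a2 b2 b3 c i k \<noteq> 0)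
     \<and> (\<forall>i\<in>{1..m}. p32 a2 b3 c i \<noteq> 0)"

definition is_the_form :: "nat \<Rightarrow> real \<Rightarrow> real \<Rightarrow> real \<Rightarrow> real \<Rightarrow> (nat \<Rightarrow> real)
     \<Rightarrow> ((nat \<Rightarrow> real) \<Rightarrow> (nat \<Rightarrow> real) \<Rightarrow> real) \<Rightarrow> bool" where
  "is_the_form m a1 a2 b2 b3 c B \<longleftrightarrow>
     (\<forall>x\<in>Vsp m. \<forall>y\<in>Vsp m. \<forall>z\<in>Vsp m. \<forall>s t.
        B (\<lambda>k. s * x k + t * y k) z = s * B x z + t * B y z
      \<and> B z (\<lambda>k. s * x k + t * y k) = s * B z x + t * B z y)
   \<and> (\<forall>i\<in>{1..2*m}. \<forall>j\<in>{1..2*m}.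
        B (evec m a1 a2 b2 b3 c i) (evec m a1 a2 b2 b3 c j)
          = (if i = j then dval m a1 a2 b2 b3 c i else 0))"

definition pos_def_on :: "nat \<Rightarrow> ((nat \<Rightarrow> real) \<Rightarrow> (nat \<Rightarrow> real) \<Rightarrow> real) \<Rightarrow> bool" where
  "pos_def_on m B \<longleftrightarrow> (\<forall>x\<in>Vsp m. x \<noteq> (\<lambda>_. 0) \<longrightarrow> B x x > 0)"

definition sign_definite :: "nat \<Rightarrow> ((nat \<Rightarrow> real) \<Rightarrow> (nat \<Rightarrow> real) \<Rightarrow> real) \<Rightarrow> bool" where
  "sign_definite m B \<longleftrightarrow> pos_def_on m B \<or> pos_def_on m (\<lambda>x y. - B x y)"

definition ord1 :: "real \<Rightarrow> real \<Rightarrow> real \<Rightarrow> bool" where "ord1 b1 b2 b3 \<longleftrightarrow> b1 > b3 \<and> b3 > b2"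
definition ord2 :: "real \<Rightarrow> real \<Rightarrow> real \<Rightarrow> bool" where "ord2 b1 b2 b3 \<longleftrightarrow> b1 > b2 \<and> b2 > b3"
definition ord3 :: "real \<Rightarrow> real \<Rightarrow> real \<Rightarrow> bool" where "ord3 b1 b2 b3 \<longleftrightarrow> b2 > b1 \<and> b1 > b3"
definition ord4 :: "real \<Rightarrow> real \<Rightarrow> real \<Rightarrow> bool" where "ord4 b1 b2 b3 \<longleftrightarrow> b2 > b3 \<and> b3 > b1"
definition ord5 :: "real \<Rightarrow> real \<Rightarrow> real \<Rightarrow> bool" where "ord5 b1 b2 b3 \<longleftrightarrow> b3 > b2 \<and> b2 > b1"
definition ord6 :: "real \<Rightarrow> real \<Rightarrow> real \<Rightarrow> bool" where "ord6 b1 b2 b3 \<longleftrightarrow> b3 > b1 \<and> b1 > b2"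

definition rest1 :: "nat \<Rightarrow> real \<Rightarrow> real \<Rightarrow> real \<Rightarrow> real \<Rightarrow> (nat \<Rightarrow> real) \<Rightarrow> bool" where
  "rest1 m a1 a2 b2 b3 c \<longleftrightarrow>
     p31 a1 b3 c (m-1) > 0 \<and> 0 > p31 a1 b3 c m
   \<and> p32 a2 b3 c (2*m-1) > 0 \<and> 0 > p32 a2 b3 c (2*m)
   \<and> (\<forall>i\<in>{1..m-1}. qq a1 a2 b2 b3 c i (2*m-1-i) > 0 \<and> 0 > qq a1 a2 b2 b3 c i (2*m-i))"

definition rest2 :: "nat \<Rightarrow> real \<Rightarrow> real \<Rightarrow> real \<Rightarrow> real \<Rightarrow> (nat \<Rightarrow> real) \<Rightarrow> bool" where
  "rest2 m a1 a2 b2 b3 c \<longleftrightarrow>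
     0 > p31 a1 b3 c 1
   \<and> p32 a2 b3 c m > 0 \<and> 0 > p32 a2 b3 c (m+1)
   \<and> (\<forall>i\<in>{1..m-1}. qq a1 a2 b2 b3 c i (2*m-i) > 0 \<and> 0 > qq a1 a2 b2 b3 c i (2*m+1-i))
   \<and> 0 > qq a1 a2 b2 b3 c m (m+1)"

definition rest3 :: "nat \<Rightarrow> real \<Rightarrow> real \<Rightarrow> real \<Rightarrow> real \<Rightarrow> (nat \<Rightarrow> real) \<Rightarrow> bool" where
  "rest3 m a1 a2 b2 b3 c \<longleftrightarrow>
     0 > p31 a1 b3 c 1
   \<and> p32 a2 b3 c m > 0 \<and> 0 > p32 a2 b3 c (m+1)
   \<and> (\<forall>i\<in>{1..m-1}. qq a1 a2 b2 b3 c i (2*m+1-i) > 0 \<and> 0 > qq a1 a2 b2 b3 c (i+1) (2*m+1-i))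
   \<and> qq a1 a2 b2 b3 c m (m+1) > 0"

definition rest4 :: "nat \<Rightarrow> real \<Rightarrow> real \<Rightarrow> real \<Rightarrow> real \<Rightarrow> (nat \<Rightarrow> real) \<Rightarrow> bool" where
  "rest4 m a1 a2 b2 b3 c \<longleftrightarrow>
     p31 a1 b3 c 1 > 0 \<and> 0 > p31 a1 b3 c 2
   \<and> p32 a2 b3 c (m+1) > 0 \<and> 0 > p32 a2 b3 c (m+2)
   \<and> (\<forall>i\<in>{2..m}. qq a1 a2 b2 b3 c i (2*m+2-i) > 0 \<and> 0 > qq a1 a2 b2 b3 c (i+1) (2*m+2-i))"

definition rest5 :: "nat \<Rightarrow> real \<Rightarrow> real \<Rightarrow> real \<Rightarrow> real \<Rightarrow> (nat \<Rightarrow> real) \<Rightarrow> bool" where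
  "rest5 m a1 a2 b2 b3 c \<longleftrightarrow>
     p31 a1 b3 c m > 0 \<and> 0 > p31 a1 b3 c (m+1)
   \<and> p32 a2 b3 c (2*m) > 0
   \<and> (\<forall>i\<in>{1..m-1}. qq a1 a2 b2 b3 c i (2*m+1-i) > 0 \<and> 0 > qq a1 a2 b2 b3 c (i+1) (2*m+1-i))
   \<and> qq a1 a2 b2 b3 c m (m+1) > 0"

definition rest6 :: "nat \<Rightarrow> real \<Rightarrow> real \<Rightarrow> real \<Rightarrow> real \<Rightarrow> (nat \<Rightarrow> real) \<Rightarrow> bool" where
  "rest6 m a1 a2 b2 b3 c \<longleftrightarrow>
     p31 a1 b3 c m > 0 \<and> 0 > p31 a1 b3 c (m+1)
   \<and> p32 a2 b3 c (2*m) > 0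
   \<and> (\<forall>i\<in>{1..m-1}. qq a1 a2 b2 b3 c i (2*m-i) > 0 \<and> 0 > qq a1 a2 b2 b3 c i (2*m+1-i))
   \<and> 0 > qq a1 a2 b2 b3 c m (m+1)"

end

theory Submission
  imports Defs
begin


lemma sgn_prod_real: "finite A \<Longrightarrow> sgn (\<Prod>k\<in>A. f k) = (\<Prod>k\<in>A. sgn (f k :: real))"
  by (induction A rule: finite_induct) (auto simp: sgn_mult)

lemma prod_sgn_neg_count:
  fixes f :: "nat \<Rightarrow> real"
  assumes "finite A" "\<forall>k\<in>A. f k \<noteq> 0"
  shows "(\<Prod>k\<in>A. sgn (f k)) = (-1) ^ card {k\<in>A. f k < 0}"
proof -
  have "(\<Prod>k\<in>A. sgn (f k)) = (\<Prod>k\<in>A \<inter> {k. f k < 0}. sgn (f k)) * (\<Prod>k\<in>A - {k. f k < 0}. sgn (f k))"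
    using assms(1) by (rule prod.Int_Diff)
  also have "(\<Prod>k\<in>A \<inter> {k. f k < 0}. sgn (f k)) = (\<Prod>k\<in>A \<inter> {k. f k < 0}. -1)"
    by (rule prod.cong) auto
  also have "(\<Prod>k\<in>A - {k. f k < 0}. sgn (f k)) = (\<Prod>k\<in>A - {k. f k < 0}. 1)"
    using assms(2) by (intro prod.cong) (auto simp: sgn_if)
  also have "A \<inter> {k. f k < 0} = {k\<in>A. f k < 0}" by auto
  finally show ?thesis by simp
qed

lemma downclosed_eq:
  fixes A :: "nat set"
  assumes "A \<subseteq> {1..n}" "\<forall>i\<in>A. \<forall>j. 1 \<le> j \<longrightarrow> j \<le> i \<longrightarrow> j \<in> A"
  shows "A = {1..card A}"
proof (cases "A = {}")
  case True then show ?thesis by simp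
next
  case False
  have fin: "finite A" using assms(1) finite_subset by blast
  define M where "M = Max A"
  have MA: "M \<in> A" using False fin M_def by simp
  have "A = {1..M}"
  proof
    show "A \<subseteq> {1..M}" using assms(1) fin M_def by auto
    show "{1..M} \<subseteq> A" using assms(2) MA by auto
  qed
  then show ?thesis by simp
qed

locale cfg =
  fixes m :: nat and e :: "nat \<Rightarrow> real" and u w :: real
  assumes m2: "2 \<le> m"
    and dec: "\<And>i. 1 \<le> i \<Longrightarrow> i < 2*m \<Longrightarrow> e (i+1) < e i"
    and uw: "w < u"
begin

lemma mono_lt: "1 \<le> i \<Longrightarrow> i < k \<Longrightarrow> k \<le> 2*m \<Longrightarrow> e k < e i"
proof (induction k)
  case 0 then show ?case by simp
next
  case (Suc k)
  show ?case
  proof (cases "i < k")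
    case True
    then have "e k < e i" using Suc by simp
    moreover have "e (Suc k) < e k" using dec[of k] Suc True by simp
    ultimately show ?thesis by simp
  next
    case False
    then have "k = i" using Suc by simp
    then show ?thesis using dec[of i] Suc by simp
  qed
qed

lemma mono_le: "1 \<le> i \<Longrightarrow> i \<le> k \<Longrightarrow> k \<le> 2*m \<Longrightarrow> e k \<le> e i"
  using mono_lt[of i k] by (cases "i = k") auto

definition S :: "nat \<Rightarrow> nat set" where
  "S i = {k \<in> {1..2*m}. k \<noteq> i \<and> e i + e k < 0}"
definition d :: "nat \<Rightarrow> nat" where "d i = card (S i)"
definition P :: "nat \<Rightarrow> nat" where "P i = of_bool (e i < u) + of_bool (e i < w)"
definition ju :: nat where "ju = card {i\<in>{1..2*m}. u < e i}"
definition jw :: nat where "jw = card {i\<in>{1..2*m}. w < e i}"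
definition nondeg :: bool where
  "nondeg \<longleftrightarrow> (\<forall>i\<in>{1..2*m}. \<forall>k\<in>{1..2*m}. k \<noteq> i \<longrightarrow> e i + e k \<noteq> 0)
     \<and> (\<forall>i\<in>{1..2*m}. e i \<noteq> u \<and> e i \<noteq> w)"
definition sig :: "nat \<Rightarrow> real" where
  "sig i = (-1)^(i-1) * (\<Prod>k\<in>{1..2*m}-{i}. sgn (e i + e k)) * sgn (e i - u) * sgn (e i - w)"

lemma card_tail: "k \<le> 2*m+1 \<Longrightarrow> i \<le> 2*m \<Longrightarrow> card ({k..2*m} - {i}) = 2*m + 1 - k - of_bool (k \<le> i)"
  by (simp add: card_Diff_singleton_if)

lemma S_fin: "finite (S i)" unfolding S_def by simp

lemma E_lemma:
  assumes i: "i \<in> {1..2*m}" and k: "k \<in> {1..2*m}" and ik: "k \<noteq> i"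
  shows "e i + e k < 0 \<longleftrightarrow> 2*m+1 \<le> d i + k + of_bool (k < i)"
proof
  assume neg: "e i + e k < 0"
  have "{k..2*m} - {i} \<subseteq> S i"
  proof
    fix x assume x: "x \<in> {k..2*m} - {i}"
    then have "e x \<le> e k" using mono_le[of k x] k by auto
    then show "x \<in> S i" using x neg k unfolding S_def by auto
  qed
  then have "card ({k..2*m} - {i}) \<le> d i" unfolding d_def using S_fin by (rule card_mono[rotated])
  then show "2*m+1 \<le> d i + k + of_bool (k < i)" using card_tail[of k i] i k ik by auto
next
  assume h: "2*m+1 \<le> d i + k + of_bool (k < i)"
  show "e i + e k < 0"
  proof (rule ccontr)
    assume "\<not> e i + e k < 0"
    then have pos: "e i + e k \<ge> 0" by simp
    have "S i \<subseteq> {k+1..2*m} - {i}"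
    proof
      fix x assume x: "x \<in> S i"
      have "\<not> x \<le> k"
      proof
        assume "x \<le> k"
        then have "e k \<le> e x" using mono_le[of x k] x k unfolding S_def by auto
        then show False using x pos unfolding S_def by auto
      qed
      then show "x \<in> {k+1..2*m} - {i}" using x unfolding S_def by auto
    qed
    then have "d i \<le> card ({k+1..2*m} - {i})" unfolding d_def by (intro card_mono) auto
    then show False using card_tail[of "k+1" i] i k ik h by (auto simp: of_bool_def split: if_splits)
  qed
qed

lemma Esym:
  assumes "i \<in> {1..2*m}" "k \<in> {1..2*m}" "k \<noteq> i"
  shows "(2*m+1 \<le> d i + k + of_bool (k < i)) = (2*m+1 \<le> d k + i + of_bool (i < k))"
  using E_lemma[OF assms] E_lemma[of k i] assms by (simp add: add.commute)

lemma d_le: "i \<in> {1..2*m} \<Longrightarrow> d i \<le> 2*m - 1"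
proof -
  assume i: "i \<in> {1..2*m}"
  have "S i \<subseteq> {1..2*m} - {i}" unfolding S_def by auto
  then have "d i \<le> card ({1..2*m} - {i})" unfolding d_def by (intro card_mono) auto
  then show ?thesis using i by simp
qed

lemma d_mono:
  assumes i: "1 \<le> i" "i < 2*m"
  shows "d i \<le> d (i+1)"
proof -
  have A: "S i - {i+1} \<subseteq> S (i+1) - {i}"
  proof
    fix x assume x: "x \<in> S i - {i+1}"
    have "e (i+1) < e i" using dec i by simp
    then show "x \<in> S (i+1) - {i}" using x unfolding S_def by auto
  qed
  have B: "(i+1 \<in> S i) = (i \<in> S (i+1))" unfolding S_def using i by (auto simp: add.commute)
  have "card (S i - {i+1}) \<le> card (S (i+1) - {i})" using A S_fin by (intro card_mono) auto
  moreover have "card (S i) = card (S i - {i+1}) + of_bool (i+1 \<in> S i)"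
    using S_fin[of i] card.remove[OF S_fin[of i], of "i+1"] by (cases "i+1 \<in> S i") auto
  moreover have "card (S (i+1)) = card (S (i+1) - {i}) + of_bool (i \<in> S (i+1))"
    using S_fin[of "i+1"] card.remove[OF S_fin[of "i+1"], of "i"] by (cases "i \<in> S (i+1)") auto
  ultimately show ?thesis unfolding d_def using B by simp
qed

lemma P_mono:
  assumes i: "1 \<le> i" "i < 2*m"
  shows "P i \<le> P (i+1)"
  using dec[OF i] unfolding P_def by (auto simp: of_bool_def)

lemma P_le: "P i \<le> 2" unfolding P_def by (auto simp: of_bool_def)

lemma ju_lemma: "i \<in> {1..2*m} \<Longrightarrow> (u < e i \<longleftrightarrow> i \<le> ju)"
proof -
  assume i: "i \<in> {1..2*m}"
  let ?A = "{i\<in>{1..2*m}. u < e i}"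
  have "?A = {1..card ?A}"
  proof (rule downclosed_eq[of _ "2*m"])
    show "?A \<subseteq> {1..2*m}" by auto
    show "\<forall>i\<in>?A. \<forall>j. 1 \<le> j \<longrightarrow> j \<le> i \<longrightarrow> j \<in> ?A"
      using mono_le by fastforce
  qed
  then have "?A = {1..ju}" unfolding ju_def by simp
  then show ?thesis using i by (metis (no_types, lifting) atLeastAtMost_iff mem_Collect_eq)
qed

lemma jw_lemma: "i \<in> {1..2*m} \<Longrightarrow> (w < e i \<longleftrightarrow> i \<le> jw)"
proof -
  assume i: "i \<in> {1..2*m}"
  let ?A = "{i\<in>{1..2*m}. w < e i}"
  have "?A = {1..card ?A}"
  proof (rule downclosed_eq[of _ "2*m"])
    show "?A \<subseteq> {1..2*m}" by auto
    show "\<forall>i\<in>?A. \<forall>j. 1 \<le> j \<longrightarrow> j \<le> i \<longrightarrow> j \<in> ?A"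
      using mono_le by fastforce
  qed
  then have "?A = {1..jw}" unfolding jw_def by simp
  then show ?thesis using i by (metis (no_types, lifting) atLeastAtMost_iff mem_Collect_eq)
qed

lemma ju_le: "ju \<le> 2*m" unfolding ju_def
  by (rule order.trans[OF card_mono[of "{1..2*m}"]]) auto
lemma jw_le: "jw \<le> 2*m" unfolding jw_def
  by (rule order.trans[OF card_mono[of "{1..2*m}"]]) auto
lemma ju_jw: "ju \<le> jw" unfolding ju_def jw_def
  using uw by (intro card_mono) auto

end


lemma neg1_pow_eq: "((-1::real)^a = (-1)^b) \<Longrightarrow> even a = even b"
  by (cases "even a"; cases "even b") auto

lemma sgn_pow_of_bool: "x \<noteq> y \<Longrightarrow> sgn (x - y) = (-1::real) ^ of_bool (x < y)"
  by (auto simp: sgn_if)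

context cfg begin

lemma sig_formula:
  assumes nd: nondeg and i: "i \<in> {1..2*m}"
  shows "sig i = (-1) ^ (i - 1 + d i + P i)"
proof -
  have "(\<Prod>k\<in>{1..2*m}-{i}. sgn (e i + e k)) = (-1) ^ card {k\<in>{1..2*m}-{i}. e i + e k < 0}"
    using nd i unfolding nondeg_def by (intro prod_sgn_neg_count) auto
  also have "{k\<in>{1..2*m}-{i}. e i + e k < 0} = S i" unfolding S_def by auto
  finally have A: "(\<Prod>k\<in>{1..2*m}-{i}. sgn (e i + e k)) = (-1) ^ d i" unfolding d_def .
  have B: "sgn (e i - u) = (-1) ^ of_bool (e i < u)" "sgn (e i - w) = (-1) ^ of_bool (e i < w)"
  proof -
    have "e i \<noteq> u" "e i \<noteq> w" using nd i unfolding nondeg_def by auto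
    then show "sgn (e i - u) = (-1) ^ of_bool (e i < u)" "sgn (e i - w) = (-1) ^ of_bool (e i < w)"
      by (simp_all add: sgn_pow_of_bool)
  qed
  show ?thesis unfolding sig_def A B P_def by (simp add: power_add)
qed

lemma sig_nondeg:
  assumes h: "\<forall>i\<in>{1..2*m}. sig i \<noteq> 0"
  shows nondeg
proof -
  have A: "\<forall>i\<in>{1..2*m}. \<forall>k\<in>{1..2*m}. k \<noteq> i \<longrightarrow> e i + e k \<noteq> 0"
  proof (intro ballI impI)
    fix i k assume i: "i \<in> {1..2*m}" and k: "k \<in> {1..2*m}" "k \<noteq> i"
    have s: "sig i \<noteq> 0" using h i by auto
    from s have "(\<Prod>k\<in>{1..2*m}-{i}. sgn (e i + e k)) \<noteq> 0" unfolding sig_def by auto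
    then have "sgn (e i + e k) \<noteq> 0" using k by (simp add: prod_zero_iff)
    then show "e i + e k \<noteq> 0" by (metis sgn_0)
  qed
  have B: "\<forall>i\<in>{1..2*m}. e i \<noteq> u \<and> e i \<noteq> w"
  proof
    fix i assume i: "i \<in> {1..2*m}"
    have s: "sig i \<noteq> 0" using h i by auto
    then show "e i \<noteq> u \<and> e i \<noteq> w" unfolding sig_def by auto
  qed
  show ?thesis using A B unfolding nondeg_def by blast
qed

definition h :: "nat \<Rightarrow> nat" where "h i = d i + P i"

lemma h_mono: "1 \<le> i \<Longrightarrow> i < 2*m \<Longrightarrow> h i \<le> h (i+1)"
  unfolding h_def using d_mono P_mono by (simp add: add_mono)

lemma h_formula:
  assumes nd: nondeg
    and par: "\<forall>i\<in>{1..2*m}. even (i - 1 + h i) = even (h 1)"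
  shows "\<forall>i\<in>{1..2*m}. h i = h 1 + (i - 1)"
proof -
  have step: "h i + 1 \<le> h (i+1)" if i: "1 \<le> i" "i < 2*m" for i
  proof -
    have "h i \<noteq> h (i+1)"
    proof
      assume eq: "h i = h (i+1)"
      have "even (i - 1 + h i) = even (h 1)" using par[rule_format, of i] i by simp
      moreover have "even (i + 1 - 1 + h (i+1)) = even (h 1)" using par[rule_format, of "i+1"] i by simp
      ultimately have "even (i - 1 + h i) = even (i + h i)" using eq by simp
      moreover have "i + h i = Suc (i - 1 + h i)" using i by simp
      ultimately show False by (metis even_Suc)
    qed
    then show ?thesis using h_mono[OF i] by simp
  qed
  have low: "h 1 + (i - 1) \<le> h i" if "1 \<le> i" "i \<le> 2*m" for i
    using that
  proof (induction i)
    case 0 then show ?case by simp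
  next
    case (Suc j)
    show ?case
    proof (cases "j = 0")
      case True then show ?thesis by simp
    next
      case False
      then have "h 1 + (j - 1) \<le> h j" using Suc by simp
      moreover have "h j + 1 \<le> h (j+1)" using step[of j] Suc False by simp
      ultimately show ?thesis using False by simp
    qed
  qed
  have high: "h i + (2*m - i) \<le> h (2*m)" if "1 \<le> i" "i \<le> 2*m" for i
  proof -
    have "\<forall>i. 1 \<le> i \<longrightarrow> 2*m - i = t \<longrightarrow> i \<le> 2*m \<longrightarrow> h i + t \<le> h (2*m)" for t
    proof (induction t)
      case 0 then show ?case by auto
    next
      case (Suc t)
      show ?case
      proof (intro allI impI)
        fix i assume a: "1 \<le> i" "2*m - i = Suc t" "i \<le> 2*m"
        then have "h (i+1) + t \<le> h (2*m)" using Suc.IH[rule_format, of "i+1"] by auto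
        moreover have "h i + 1 \<le> h (i+1)" using step[of i] a by auto
        ultimately show "h i + Suc t \<le> h (2*m)" by simp
      qed
    qed
    then show ?thesis using that by blast
  qed
  have m1: "1 \<in> {1..2*m}" "2*m \<in> {1..2*m}" "2*m \<noteq> 1" using m2 by auto
  have sym: "(2*m+1 \<le> d 1 + 2*m + of_bool (2*m < 1)) = (2*m+1 \<le> d (2*m) + 1 + of_bool (1 < 2*m))"
    using Esym[OF m1] by simp
  have dtop: "d (2*m) \<le> 2*m - 1" using d_le m1 by auto
  have "d (2*m) \<le> d 1 + (2*m - 2)"
  proof (cases "d 1 = 0")
    case True
    then show ?thesis using sym m2 dtop by auto
  next
    case False
    then show ?thesis using dtop m2 by auto
  qed
  moreover have "P (2*m) \<le> P 1 + 2" using P_le[of "2*m"] by simp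
  ultimately have top: "h (2*m) \<le> h 1 + 2*m" unfolding h_def using m2 by simp
  show ?thesis
  proof
    fix i assume i: "i \<in> {1..2*m}"
    have a: "h 1 + (i - 1) \<le> h i" using low i by auto
    have b: "h i \<le> h 1 + i" using high[of i] top i by auto
    have c: "even (i - 1 + h i) = even (h 1)" using par[rule_format, of i] i by simp
    show "h i = h 1 + (i - 1)"
    proof (rule ccontr)
      assume "h i \<noteq> h 1 + (i - 1)"
      then have "h i = h 1 + i" using a b i by auto
      then have "i - 1 + h i = 2 * (i - 1) + h 1 + 1" using i by (cases i) auto
      then show False using c by presburger
    qed
  qed
qed

end


lemma shape_arith:
  fixes m ju jw :: nat and D :: "nat \<Rightarrow> nat"
  assumes m2: "2 \<le> m" and jj: "ju \<le> jw" "jw \<le> 2*m"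
    and Dform: "\<And>i. 1 \<le> i \<Longrightarrow> i \<le> 2*m \<Longrightarrow>
        D i + (of_bool (ju < i) + of_bool (jw < i)) = D 1 + (of_bool (ju < 1) + of_bool (jw < 1)) + (i - 1)"
    and sym: "\<And>i k. 1 \<le> i \<Longrightarrow> i \<le> 2*m \<Longrightarrow> 1 \<le> k \<Longrightarrow> k \<le> 2*m \<Longrightarrow> k \<noteq> i \<Longrightarrow>
        (2*m+1 \<le> D i + k + of_bool (k < i)) = (2*m+1 \<le> D k + i + of_bool (i < k))"
    and Dle: "D (2*m) \<le> 2*m - 1"
  shows "(ju = m-1 \<and> jw = 2*m-1 \<and> D 1 = 2) \<or> (ju = 0 \<and> jw = m \<and> D 1 = 1)
       \<or> (ju = 0 \<and> jw = m \<and> D 1 = 0) \<or> (ju = 1 \<and> jw = m+1 \<and> D 1 = 0)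
       \<or> (ju = m \<and> jw = 2*m \<and> D 1 = 0) \<or> (ju = m \<and> jw = 2*m \<and> D 1 = 1)"
proof -
  have top: "D (2*m) + (of_bool (ju < 2*m) + of_bool (jw < 2*m)) = D 1 + (of_bool (ju < 1) + of_bool (jw < 1)) + (2*m - 1)"
    using Dform[of "2*m"] m2 by simp
  have s1: "(2*m+1 \<le> D 1 + 2*m) = (2*m+1 \<le> D (2*m) + 1 + 1)"
    using sym[of 1 "2*m"] m2 by simp
  consider (A) "ju = 0" "1 \<le> jw" "jw < 2*m" | (B) "1 \<le> ju" "ju < 2*m" "jw = 2*m"
    | (C) "1 \<le> ju" "jw < 2*m" | (Z) "ju = 0 \<and> jw = 0 \<or> ju = 0 \<and> jw = 2*m \<or> ju = 2*m"
    using jj by linarith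
  then show ?thesis
  proof cases
    case Z
    then show ?thesis using top s1 Dle m2 jj by (auto simp: of_bool_def split: if_splits)
  next
    case A
    define j where "j = jw"
    have Dj: "D i + of_bool (j < i) = D 1 + (i - 1)" if "1 \<le> i" "i \<le> 2*m" for i
      using Dform[OF that] A that unfolding j_def by (auto simp: of_bool_def split: if_splits)
    have d1: "D 1 \<le> 1" using top s1 Dle A m2 by (auto simp: of_bool_def split: if_splits)
    have "j = m"
    proof (cases "D 1 = 1")
      case True
      have "\<not> j < m"
      proof
        assume jm: "j < m"
        have "(2*m+1 \<le> D m + (m+1) + of_bool (m+1 < m)) = (2*m+1 \<le> D (m+1) + m + of_bool (m < m+1))"
          using m2 by (intro sym) auto
        moreover have "D m + 1 = D 1 + (m - 1)"
        proof -
          have "D (m) + of_bool (j < m) = D 1 + (m - 1)" using m2 jm m2 by (intro Dj) auto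
          then show ?thesis using jm m2 m2 by (auto simp: of_bool_def split: if_splits)
        qed
        moreover have "D (m+1) + 1 = D 1 + m"
        proof -
          have "D (m+1) + of_bool (j < m+1) = D 1 + (m+1 - 1)" using m2 jm m2 by (intro Dj) auto
          then show ?thesis using jm m2 m2 by (auto simp: of_bool_def split: if_splits)
        qed
        ultimately show False using True m2 by (auto simp: of_bool_def split: if_splits)
      qed
      moreover have "\<not> m < j"
      proof
        assume jm: "m < j"
        have "(2*m+1 \<le> D (m-1) + (m+1) + of_bool (m+1 < m-1)) = (2*m+1 \<le> D (m+1) + (m-1) + of_bool (m-1 < m+1))"
          using m2 by (intro sym) auto
        moreover have "D (m-1) = D 1 + (m - 2)"
        proof -
          have "D (m-1) + of_bool (j < m-1) = D 1 + (m-1 - 1)" using m2 jm m2 by (intro Dj) auto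
          then show ?thesis using jm m2 m2 by (auto simp: of_bool_def split: if_splits)
        qed
        moreover have "D (m+1) = D 1 + m"
        proof -
          have "D (m+1) + of_bool (j < m+1) = D 1 + (m+1 - 1)" using m2 jm m2 by (intro Dj) auto
          then show ?thesis using jm m2 m2 by (auto simp: of_bool_def split: if_splits)
        qed
        ultimately show False using True m2 by (auto simp: of_bool_def split: if_splits)
      qed
      ultimately show ?thesis by simp
    next
      case False
      then have D0: "D 1 = 0" using d1 by simp
      have "\<not> j < m"
      proof
        assume jm: "j < m"
        have "(2*m+1 \<le> D (j+1) + (2*m+1-j) + of_bool (2*m+1-j < j+1)) = (2*m+1 \<le> D (2*m+1-j) + (j+1) + of_bool (j+1 < 2*m+1-j))"
          using m2 jm A unfolding j_def by (intro sym) auto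
        moreover have "D (j+1) + 1 = D 1 + j"
        proof -
          have "D (j+1) + of_bool (j < j+1) = D 1 + (j+1 - 1)" using m2 jm m2 by (intro Dj) auto
          then show ?thesis using jm m2 m2 by (auto simp: of_bool_def split: if_splits)
        qed
        moreover have "D (2*m+1-j) + 1 = D 1 + (2*m - j)"
        proof -
          have "D (2*m+1-j) + of_bool (j < 2*m+1-j) = D 1 + (2*m+1-j - 1)" using m2 jm m2 A j_def by (intro Dj) auto
          then show ?thesis using jm m2 A j_def by (auto simp: of_bool_def split: if_splits)
        qed
        ultimately show False using D0 m2 jm by (auto simp: of_bool_def split: if_splits)
      qed
      moreover have "\<not> m < j"
      proof
        assume jm: "m < j"
        have "(2*m+1 \<le> D m + (m+1) + of_bool (m+1 < m)) = (2*m+1 \<le> D (m+1) + m + of_bool (m < m+1))"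
          using m2 by (intro sym) auto
        moreover have "D m = D 1 + (m - 1)"
        proof -
          have "D (m) + of_bool (j < m) = D 1 + (m - 1)" using m2 jm m2 by (intro Dj) auto
          then show ?thesis using jm m2 m2 by (auto simp: of_bool_def split: if_splits)
        qed
        moreover have "D (m+1) = D 1 + m"
        proof -
          have "D (m+1) + of_bool (j < m+1) = D 1 + (m+1 - 1)" using m2 jm m2 by (intro Dj) auto
          then show ?thesis using jm m2 m2 by (auto simp: of_bool_def split: if_splits)
        qed
        ultimately show False using D0 m2 by (auto simp: of_bool_def split: if_splits)
      qed
      ultimately show ?thesis by simp
    qed
    then show ?thesis using A d1 unfolding j_def by auto
  next
    case B
    define j where "j = ju"
    have Dj: "D i + of_bool (j < i) = D 1 + (i - 1)" if "1 \<le> i" "i \<le> 2*m" for i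
      using Dform[OF that] B that unfolding j_def by (auto simp: of_bool_def split: if_splits)
    have d1: "D 1 \<le> 1" using top s1 Dle B m2 by (auto simp: of_bool_def split: if_splits)
    have "j = m"
    proof (cases "D 1 = 1")
      case True
      have "\<not> j < m"
      proof
        assume jm: "j < m"
        have "(2*m+1 \<le> D m + (m+1) + of_bool (m+1 < m)) = (2*m+1 \<le> D (m+1) + m + of_bool (m < m+1))"
          using m2 by (intro sym) auto
        moreover have "D m + 1 = D 1 + (m - 1)"
        proof -
          have "D (m) + of_bool (j < m) = D 1 + (m - 1)" using m2 jm m2 by (intro Dj) auto
          then show ?thesis using jm m2 m2 by (auto simp: of_bool_def split: if_splits)
        qed
        moreover have "D (m+1) + 1 = D 1 + m"
        proof -
          have "D (m+1) + of_bool (j < m+1) = D 1 + (m+1 - 1)" using m2 jm m2 by (intro Dj) auto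
          then show ?thesis using jm m2 m2 by (auto simp: of_bool_def split: if_splits)
        qed
        ultimately show False using True m2 by (auto simp: of_bool_def split: if_splits)
      qed
      moreover have "\<not> m < j"
      proof
        assume jm: "m < j"
        have "(2*m+1 \<le> D (m-1) + (m+1) + of_bool (m+1 < m-1)) = (2*m+1 \<le> D (m+1) + (m-1) + of_bool (m-1 < m+1))"
          using m2 by (intro sym) auto
        moreover have "D (m-1) = D 1 + (m - 2)"
        proof -
          have "D (m-1) + of_bool (j < m-1) = D 1 + (m-1 - 1)" using m2 jm m2 by (intro Dj) auto
          then show ?thesis using jm m2 m2 by (auto simp: of_bool_def split: if_splits)
        qed
        moreover have "D (m+1) = D 1 + m"
        proof -
          have "D (m+1) + of_bool (j < m+1) = D 1 + (m+1 - 1)" using m2 jm m2 by (intro Dj) auto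
          then show ?thesis using jm m2 m2 by (auto simp: of_bool_def split: if_splits)
        qed
        ultimately show False using True m2 by (auto simp: of_bool_def split: if_splits)
      qed
      ultimately show ?thesis by simp
    next
      case False
      then have D0: "D 1 = 0" using d1 by simp
      have "\<not> j < m"
      proof
        assume jm: "j < m"
        have "(2*m+1 \<le> D (j+1) + (2*m+1-j) + of_bool (2*m+1-j < j+1)) = (2*m+1 \<le> D (2*m+1-j) + (j+1) + of_bool (j+1 < 2*m+1-j))"
          using m2 jm B unfolding j_def by (intro sym) auto
        moreover have "D (j+1) + 1 = D 1 + j"
        proof -
          have "D (j+1) + of_bool (j < j+1) = D 1 + (j+1 - 1)" using m2 jm m2 by (intro Dj) auto
          then show ?thesis using jm m2 m2 by (auto simp: of_bool_def split: if_splits)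
        qed
        moreover have "D (2*m+1-j) + 1 = D 1 + (2*m - j)"
        proof -
          have "D (2*m+1-j) + of_bool (j < 2*m+1-j) = D 1 + (2*m+1-j - 1)" using m2 jm m2 B j_def by (intro Dj) auto
          then show ?thesis using jm m2 B j_def by (auto simp: of_bool_def split: if_splits)
        qed
        ultimately show False using D0 m2 jm by (auto simp: of_bool_def split: if_splits)
      qed
      moreover have "\<not> m < j"
      proof
        assume jm: "m < j"
        have "(2*m+1 \<le> D m + (m+1) + of_bool (m+1 < m)) = (2*m+1 \<le> D (m+1) + m + of_bool (m < m+1))"
          using m2 by (intro sym) auto
        moreover have "D m = D 1 + (m - 1)"
        proof -
          have "D (m) + of_bool (j < m) = D 1 + (m - 1)" using m2 jm m2 by (intro Dj) auto
          then show ?thesis using jm m2 m2 by (auto simp: of_bool_def split: if_splits)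
        qed
        moreover have "D (m+1) = D 1 + m"
        proof -
          have "D (m+1) + of_bool (j < m+1) = D 1 + (m+1 - 1)" using m2 jm m2 by (intro Dj) auto
          then show ?thesis using jm m2 m2 by (auto simp: of_bool_def split: if_splits)
        qed
        ultimately show False using D0 m2 by (auto simp: of_bool_def split: if_splits)
      qed
      ultimately show ?thesis by simp
    qed
    then show ?thesis using B d1 unfolding j_def by auto
  next
    case C
    have Df: "D i + (of_bool (ju < i) + of_bool (jw < i)) = D 1 + (i - 1)" if "1 \<le> i" "i \<le> 2*m" for i
      using Dform[OF that] C jj by simp
    have d1: "D 1 = 0 \<or> D 1 = 2" using top s1 Dle C m2 jj by (auto simp: of_bool_def split: if_splits)
    then show ?thesis
    proof
      assume D2: "D 1 = 2"
      have a: "(2*m+1 \<le> D 1 + (2*m-1) + of_bool (2*m-1 < 1)) = (2*m+1 \<le> D (2*m-1) + 1 + of_bool (1 < 2*m-1))"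
        using m2 by (intro sym) auto
      have b: "D (2*m-1) + (of_bool (ju < 2*m-1) + of_bool (jw < 2*m-1)) = D 1 + (2*m - 2)"
        using m2 Df[of "2*m-1"] by (simp add: of_bool_def)
      have jw: "jw = 2*m-1" using a b D2 C m2 jj by (auto simp: of_bool_def split: if_splits)
      have c: "(2*m+1 \<le> D (m-1) + (m+1) + of_bool (m+1 < m-1)) = (2*m+1 \<le> D (m+1) + (m-1) + of_bool (m-1 < m+1))"
        using m2 by (intro sym) auto
      have c1: "D (m-1) + (of_bool (ju < m-1) + of_bool (jw < m-1)) = D 1 + (m - 2)"
        using m2 Df[of "m-1"] by (simp add: of_bool_def)
      have c2: "D (m+1) + (of_bool (ju < m+1) + of_bool (jw < m+1)) = D 1 + m"
        using m2 Df[of "m+1"] by (simp add: of_bool_def)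
      have ju1: "m - 1 \<le> ju" using c c1 c2 D2 jw C m2 jj by (auto simp: of_bool_def split: if_splits)
      have f: "(2*m+1 \<le> D (m-1) + m + of_bool (m < m-1)) = (2*m+1 \<le> D m + (m-1) + of_bool (m-1 < m))"
        using m2 by (intro sym) auto
      have f1: "D m + (of_bool (ju < m) + of_bool (jw < m)) = D 1 + (m - 1)"
        using m2 Df[of "m"] by (simp add: of_bool_def)
      have "ju < m" using f f1 c1 D2 jw C m2 ju1 jj by (auto simp: of_bool_def split: if_splits)
      then show ?thesis using ju1 jw D2 by auto
    next
      assume D0: "D 1 = 0"
      have a: "(2*m+1 \<le> D 2 + 2*m + of_bool (2*m < 2)) = (2*m+1 \<le> D (2*m) + 2 + of_bool (2 < 2*m))"
        using m2 by (intro sym) auto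
      have a1: "D 2 + (of_bool (ju < 2) + of_bool (jw < 2)) = D 1 + 1"
        using m2 Df[of 2] by (simp add: of_bool_def)
      have a2: "D (2*m) + (of_bool (ju < 2*m) + of_bool (jw < 2*m)) = D 1 + (2*m - 1)"
        using m2 Df[of "2*m"] by (simp add: of_bool_def)
      have ju: "ju = 1" using a a1 a2 D0 C m2 jj by (auto simp: of_bool_def split: if_splits)
      have b: "(2*m+1 \<le> D (m+1) + (m+2) + of_bool (m+2 < m+1)) = (2*m+1 \<le> D (m+2) + (m+1) + of_bool (m+1 < m+2))"
        using m2 by (intro sym) auto
      have b1: "D (m+1) + (of_bool (ju < m+1) + of_bool (jw < m+1)) = D 1 + m"
        using m2 Df[of "m+1"] by (simp add: of_bool_def)
      have b2: "D (m+2) + (of_bool (ju < m+2) + of_bool (jw < m+2)) = D 1 + (m+1)"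
        using m2 Df[of "m+2"] by (simp add: of_bool_def)
      have jw1: "m+1 \<le> jw" using b b1 b2 D0 ju C m2 jj by (auto simp: of_bool_def split: if_splits)
      have c: "(2*m+1 \<le> D m + (m+2) + of_bool (m+2 < m)) = (2*m+1 \<le> D (m+2) + m + of_bool (m < m+2))"
        using m2 by (intro sym) auto
      have c1: "D m + (of_bool (ju < m) + of_bool (jw < m)) = D 1 + (m - 1)"
        using m2 Df[of "m"] by (simp add: of_bool_def)
      have "jw < m+2" using c c1 b2 D0 ju C m2 jw1 jj by (auto simp: of_bool_def split: if_splits)
      then show ?thesis using ju jw1 D0 by auto
    qed
  qed
qed



context cfg begin

definition sys1 where "sys1 \<longleftrightarrow>
     e (m-1) - u > 0 \<and> 0 > e m - u
   \<and> e (2*m-1) - w > 0 \<and> 0 > e (2*m) - w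
   \<and> (\<forall>i\<in>{1..m-1}. e i + e (2*m-1-i) > 0 \<and> 0 > e i + e (2*m-i))"
definition sys2 where "sys2 \<longleftrightarrow>
     0 > e 1 - u
   \<and> e m - w > 0 \<and> 0 > e (m+1) - w
   \<and> (\<forall>i\<in>{1..m-1}. e i + e (2*m-i) > 0 \<and> 0 > e i + e (2*m+1-i))
   \<and> 0 > e m + e (m+1)"
definition sys3 where "sys3 \<longleftrightarrow>
     0 > e 1 - u
   \<and> e m - w > 0 \<and> 0 > e (m+1) - w
   \<and> (\<forall>i\<in>{1..m-1}. e i + e (2*m+1-i) > 0 \<and> 0 > e (i+1) + e (2*m+1-i))
   \<and> e m + e (m+1) > 0"
definition sys4 where "sys4 \<longleftrightarrow>
     e 1 - u > 0 \<and> 0 > e 2 - u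
   \<and> e (m+1) - w > 0 \<and> 0 > e (m+2) - w
   \<and> (\<forall>i\<in>{2..m}. e i + e (2*m+2-i) > 0 \<and> 0 > e (i+1) + e (2*m+2-i))"
definition sys5 where "sys5 \<longleftrightarrow>
     e m - u > 0 \<and> 0 > e (m+1) - u
   \<and> e (2*m) - w > 0
   \<and> (\<forall>i\<in>{1..m-1}. e i + e (2*m+1-i) > 0 \<and> 0 > e (i+1) + e (2*m+1-i))
   \<and> e m + e (m+1) > 0"
definition sys6 where "sys6 \<longleftrightarrow>
     e m - u > 0 \<and> 0 > e (m+1) - u
   \<and> e (2*m) - w > 0
   \<and> (\<forall>i\<in>{1..m-1}. e i + e (2*m-i) > 0 \<and> 0 > e i + e (2*m+1-i))
   \<and> 0 > e m + e (m+1)"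

lemma Pf: "nondeg \<Longrightarrow> i \<in> {1..2*m} \<Longrightarrow> P i = of_bool (ju < i) + of_bool (jw < i)"
proof -
  assume nd: nondeg and i: "i \<in> {1..2*m}"
  have "e i \<noteq> u" "e i \<noteq> w" using nd i unfolding nondeg_def by auto
  then have "(e i < u) = (\<not> u < e i)" "(e i < w) = (\<not> w < e i)" by auto
  then show ?thesis unfolding P_def using ju_lemma[OF i] jw_lemma[OF i] by auto
qed

lemma qpos:
  assumes nd: nondeg and i: "i \<in> {1..2*m}" and k: "k \<in> {1..2*m}" and ik: "k \<noteq> i"
    and le: "d i + k + of_bool (k < i) \<le> 2*m"
  shows "e i + e k > 0"
proof -
  have "\<not> e i + e k < 0" using E_lemma[OF i k ik] le by simp
  moreover have "e i + e k \<noteq> 0" using nd i k ik unfolding nondeg_def by blast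
  ultimately show ?thesis by linarith
qed

lemma qneg:
  assumes i: "i \<in> {1..2*m}" and k: "k \<in> {1..2*m}" and ik: "k \<noteq> i"
    and le: "2*m+1 \<le> d i + k + of_bool (k < i)"
  shows "e i + e k < 0"
  using E_lemma[OF i k ik] le by simp

lemma upos: "i \<in> {1..2*m} \<Longrightarrow> i \<le> ju \<Longrightarrow> e i - u > 0" using ju_lemma[of i] by simp
lemma uneg:
  assumes nd: nondeg and i: "i \<in> {1..2*m}" and l: "ju < i" shows "0 > e i - u"
proof -
  have "\<not> u < e i" using ju_lemma[OF i] l by simp
  moreover have "e i \<noteq> u" using nd i unfolding nondeg_def by blast
  ultimately show ?thesis by linarith
qed
lemma wpos: "i \<in> {1..2*m} \<Longrightarrow> i \<le> jw \<Longrightarrow> e i - w > 0" using jw_lemma[of i] by simp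
lemma wneg:
  assumes nd: nondeg and i: "i \<in> {1..2*m}" and l: "jw < i" shows "0 > e i - w"
proof -
  have "\<not> w < e i" using jw_lemma[OF i] l by simp
  moreover have "e i \<noteq> w" using nd i unfolding nondeg_def by blast
  ultimately show ?thesis by linarith
qed

end


context cfg begin
lemma T1_sys:
  assumes nd: nondeg and T: "ju = m-1" "jw = 2*m-1"
    and dv: "\<And>i. 1 \<le> i \<Longrightarrow> i \<le> 2*m \<Longrightarrow> d i = i + 1 - of_bool (m \<le> i) - of_bool (i = 2*m)"
  shows sys1
  unfolding sys1_def
proof (intro conjI ballI)
  show "e (m-1) - u > 0" using T m2 by (intro upos) auto
  show "0 > e m - u" using T m2 by (intro uneg[OF nd]) auto
  show "e (2*m-1) - w > 0" using T m2 by (intro wpos) auto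
  show "0 > e (2*m) - w" using T m2 by (intro wneg[OF nd]) auto
  fix i assume i: "i \<in> {1..m-1}"
  have di: "d i = i + 1" using dv[of i] i m2 by (auto simp: of_bool_def)
  show "e i + e (2*m-1-i) > 0" by (rule qpos[OF nd]) (use i m2 di in \<open>auto simp: of_bool_def\<close>)
  show "0 > e i + e (2*m-i)" by (rule qneg) (use i m2 di in \<open>auto simp: of_bool_def\<close>)
qed
end


context cfg begin

lemma T2_sys:
  assumes nd: nondeg and T: "ju = 0" "jw = m"
    and dv: "\<And>i. 1 \<le> i \<Longrightarrow> i \<le> 2*m \<Longrightarrow> d i = i - of_bool (m < i)"
  shows sys2
  unfolding sys2_def
proof (intro conjI ballI)
  show "0 > e 1 - u" using T m2 by (intro uneg[OF nd]) auto
  show "e m - w > 0" using T m2 by (intro wpos) auto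
  show "0 > e (m+1) - w" using T m2 by (intro wneg[OF nd]) auto
  have dm: "d m = m" using dv[of m] m2 by (auto simp: of_bool_def)
  show "0 > e m + e (m+1)" by (rule qneg) (use m2 dm in \<open>auto simp: of_bool_def\<close>)
  fix i assume i: "i \<in> {1..m-1}"
  have di: "d i = i" using dv[of i] i m2 by (auto simp: of_bool_def)
  show "e i + e (2*m-i) > 0" by (rule qpos[OF nd]) (use i m2 di in \<open>auto simp: of_bool_def\<close>)
  show "0 > e i + e (2*m+1-i)" by (rule qneg) (use i m2 di in \<open>auto simp: of_bool_def\<close>)
qed

lemma T3_sys:
  assumes nd: nondeg and T: "ju = 0" "jw = m"
    and dv: "\<And>i. 1 \<le> i \<Longrightarrow> i \<le> 2*m \<Longrightarrow> d i = i - 1 - of_bool (m < i)"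
  shows sys3
  unfolding sys3_def
proof (intro conjI ballI)
  show "0 > e 1 - u" using T m2 by (intro uneg[OF nd]) auto
  show "e m - w > 0" using T m2 by (intro wpos) auto
  show "0 > e (m+1) - w" using T m2 by (intro wneg[OF nd]) auto
  have dm: "d m = m - 1" using dv[of m] m2 by (auto simp: of_bool_def)
  show "e m + e (m+1) > 0" by (rule qpos[OF nd]) (use m2 dm in \<open>auto simp: of_bool_def\<close>)
  fix i assume i: "i \<in> {1..m-1}"
  have di: "d i = i - 1" using dv[of i] i m2 by (auto simp: of_bool_def)
  have di1: "d (i+1) = i" using dv[of "i+1"] i m2 by (auto simp: of_bool_def)
  show "e i + e (2*m+1-i) > 0" by (rule qpos[OF nd]) (use i m2 di in \<open>auto simp: of_bool_def\<close>)
  show "0 > e (i+1) + e (2*m+1-i)" by (rule qneg) (use i m2 di1 in \<open>auto simp: of_bool_def\<close>)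
qed

lemma T4_sys:
  assumes nd: nondeg and T: "ju = 1" "jw = m+1"
    and dv: "\<And>i. 1 \<le> i \<Longrightarrow> i \<le> 2*m \<Longrightarrow> d i = i - 1 - of_bool (2 \<le> i) - of_bool (m+2 \<le> i)"
  shows sys4
  unfolding sys4_def
proof (intro conjI ballI)
  show "e 1 - u > 0" using T m2 by (intro upos) auto
  show "0 > e 2 - u" using T m2 by (intro uneg[OF nd]) auto
  show "e (m+1) - w > 0" using T m2 by (intro wpos) auto
  show "0 > e (m+2) - w" using T m2 by (intro wneg[OF nd]) auto
  fix i assume i: "i \<in> {2..m}"
  have di: "d i = i - 2" using dv[of i] i m2 by (auto simp: of_bool_def)
  have di1: "d (i+1) = i - 1" using dv[of "i+1"] i m2 by (auto simp: of_bool_def)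
  show "e i + e (2*m+2-i) > 0" by (rule qpos[OF nd]) (use i m2 di in \<open>auto simp: of_bool_def\<close>)
  show "0 > e (i+1) + e (2*m+2-i)" by (rule qneg) (use i m2 di1 in \<open>auto simp: of_bool_def\<close>)
qed

lemma T5_sys:
  assumes nd: nondeg and T: "ju = m" "jw = 2*m"
    and dv: "\<And>i. 1 \<le> i \<Longrightarrow> i \<le> 2*m \<Longrightarrow> d i = i - 1 - of_bool (m < i)"
  shows sys5
  unfolding sys5_def
proof (intro conjI ballI)
  show "e m - u > 0" using T m2 by (intro upos) auto
  show "0 > e (m+1) - u" using T m2 by (intro uneg[OF nd]) auto
  show "e (2*m) - w > 0" using T m2 by (intro wpos) auto
  have dm: "d m = m - 1" using dv[of m] m2 by (auto simp: of_bool_def)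
  show "e m + e (m+1) > 0" by (rule qpos[OF nd]) (use m2 dm in \<open>auto simp: of_bool_def\<close>)
  fix i assume i: "i \<in> {1..m-1}"
  have di: "d i = i - 1" using dv[of i] i m2 by (auto simp: of_bool_def)
  have di1: "d (i+1) = i" using dv[of "i+1"] i m2 by (auto simp: of_bool_def)
  show "e i + e (2*m+1-i) > 0" by (rule qpos[OF nd]) (use i m2 di in \<open>auto simp: of_bool_def\<close>)
  show "0 > e (i+1) + e (2*m+1-i)" by (rule qneg) (use i m2 di1 in \<open>auto simp: of_bool_def\<close>)
qed

lemma T6_sys:
  assumes nd: nondeg and T: "ju = m" "jw = 2*m"
    and dv: "\<And>i. 1 \<le> i \<Longrightarrow> i \<le> 2*m \<Longrightarrow> d i = i - of_bool (m < i)"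
  shows sys6
  unfolding sys6_def
proof (intro conjI ballI)
  show "e m - u > 0" using T m2 by (intro upos) auto
  show "0 > e (m+1) - u" using T m2 by (intro uneg[OF nd]) auto
  show "e (2*m) - w > 0" using T m2 by (intro wpos) auto
  have dm: "d m = m" using dv[of m] m2 by (auto simp: of_bool_def)
  show "0 > e m + e (m+1)" by (rule qneg) (use m2 dm in \<open>auto simp: of_bool_def\<close>)
  fix i assume i: "i \<in> {1..m-1}"
  have di: "d i = i" using dv[of i] i m2 by (auto simp: of_bool_def)
  show "e i + e (2*m-i) > 0" by (rule qpos[OF nd]) (use i m2 di in \<open>auto simp: of_bool_def\<close>)
  show "0 > e i + e (2*m+1-i)" by (rule qneg) (use i m2 di in \<open>auto simp: of_bool_def\<close>)
qed

end


context cfg begin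

lemma forward:
  assumes nd: nondeg
    and par: "\<forall>i\<in>{1..2*m}. even (i - 1 + h i) = even (h 1)"
  shows "(sys1 \<and> d 1 + P 1 = 2) \<or> (sys2 \<and> d 1 + P 1 = 2) \<or> (sys3 \<and> d 1 + P 1 = 1)
       \<or> (sys4 \<and> d 1 + P 1 = 0) \<or> (sys5 \<and> d 1 + P 1 = 0) \<or> (sys6 \<and> d 1 + P 1 = 1)"
proof -
  have hf: "\<forall>i\<in>{1..2*m}. h i = h 1 + (i - 1)" by (rule h_formula[OF nd par])
  have one: "1 \<in> {1..2*m}" using m2 by auto
  have Df: "d i + (of_bool (ju < i) + of_bool (jw < i)) = d 1 + (of_bool (ju < 1) + of_bool (jw < 1)) + (i - 1)"
    if "1 \<le> i" "i \<le> 2*m" for i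
  proof -
    have ii: "i \<in> {1..2*m}" using that by simp
    have "d i + P i = d 1 + P 1 + (i - 1)" using hf ii unfolding h_def by blast
    then show ?thesis using Pf[OF nd ii] Pf[OF nd one] by simp
  qed
  have sh: "(ju = m-1 \<and> jw = 2*m-1 \<and> d 1 = 2) \<or> (ju = 0 \<and> jw = m \<and> d 1 = 1)
       \<or> (ju = 0 \<and> jw = m \<and> d 1 = 0) \<or> (ju = 1 \<and> jw = m+1 \<and> d 1 = 0)
       \<or> (ju = m \<and> jw = 2*m \<and> d 1 = 0) \<or> (ju = m \<and> jw = 2*m \<and> d 1 = 1)"
  proof (rule shape_arith[OF m2 ju_jw jw_le])
    show "\<And>i. 1 \<le> i \<Longrightarrow> i \<le> 2*m \<Longrightarrow> d i + (of_bool (ju < i) + of_bool (jw < i)) = d 1 + (of_bool (ju < 1) + of_bool (jw < 1)) + (i - 1)"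
      by (rule Df)
    show "\<And>i k. 1 \<le> i \<Longrightarrow> i \<le> 2*m \<Longrightarrow> 1 \<le> k \<Longrightarrow> k \<le> 2*m \<Longrightarrow> k \<noteq> i \<Longrightarrow>
        (2*m+1 \<le> d i + k + of_bool (k < i)) = (2*m+1 \<le> d k + i + of_bool (i < k))"
      using Esym by auto
    show "d (2*m) \<le> 2*m - 1" using d_le m2 by auto
  qed
  have P1: "P 1 = of_bool (ju < 1) + of_bool (jw < 1)" using Pf[OF nd one] by simp
  show ?thesis
  proof -
    { assume T: "ju = m-1" "jw = 2*m-1" "d 1 = 2"
      have "d i = i + 1 - of_bool (m \<le> i) - of_bool (i = 2*m)" if "1 \<le> i" "i \<le> 2*m" for i
        using Df[OF that] T m2 that by (auto simp: of_bool_def split: if_splits)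
      then have "sys1" using T1_sys[OF nd T(1,2)] by blast
      moreover have "d 1 + P 1 = 2" using T P1 m2 by simp
      ultimately have ?thesis by blast }
    moreover
    { assume T: "ju = 0" "jw = m" "d 1 = 1"
      have "d i = i - of_bool (m < i)" if "1 \<le> i" "i \<le> 2*m" for i
        using Df[OF that] T m2 that by (auto simp: of_bool_def split: if_splits)
      then have "sys2" using T2_sys[OF nd T(1,2)] by blast
      moreover have "d 1 + P 1 = 2" using T P1 m2 by simp
      ultimately have ?thesis by blast }
    moreover
    { assume T: "ju = 0" "jw = m" "d 1 = 0"
      have "d i = i - 1 - of_bool (m < i)" if "1 \<le> i" "i \<le> 2*m" for i
        using Df[OF that] T m2 that by (auto simp: of_bool_def split: if_splits)
      then have "sys3" using T3_sys[OF nd T(1,2)] by blast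
      moreover have "d 1 + P 1 = 1" using T P1 m2 by simp
      ultimately have ?thesis by blast }
    moreover
    { assume T: "ju = 1" "jw = m+1" "d 1 = 0"
      have "d i = i - 1 - of_bool (2 \<le> i) - of_bool (m+2 \<le> i)" if "1 \<le> i" "i \<le> 2*m" for i
        using Df[OF that] T m2 that by (auto simp: of_bool_def split: if_splits)
      then have "sys4" using T4_sys[OF nd T(1,2)] by blast
      moreover have "d 1 + P 1 = 0" using T P1 m2 by simp
      ultimately have ?thesis by blast }
    moreover
    { assume T: "ju = m" "jw = 2*m" "d 1 = 0"
      have "d i = i - 1 - of_bool (m < i)" if "1 \<le> i" "i \<le> 2*m" for i
        using Df[OF that] T m2 that by (auto simp: of_bool_def split: if_splits)
      then have "sys5" using T5_sys[OF nd T(1,2)] by blast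
      moreover have "d 1 + P 1 = 0" using T P1 m2 by simp
      ultimately have ?thesis by blast }
    moreover
    { assume T: "ju = m" "jw = 2*m" "d 1 = 1"
      have "d i = i - of_bool (m < i)" if "1 \<le> i" "i \<le> 2*m" for i
        using Df[OF that] T m2 that by (auto simp: of_bool_def split: if_splits)
      then have "sys6" using T6_sys[OF nd T(1,2)] by blast
      moreover have "d 1 + P 1 = 1" using T P1 m2 by simp
      ultimately have ?thesis by blast }
    note c = calculation this
    from sh show ?thesis
    proof (elim disjE conjE)
    qed (fact c[rule_format])+
  qed
qed

end


context cfg begin

lemma thr:
  assumes i: "i \<in> {1..2*m}" and a: "1 \<le> a" "a \<le> 2*m+1"
    and lo: "a = 1 \<or> (b \<in> {1..2*m} \<and> e i + e b > 0 \<and> (\<forall>k. k \<noteq> i \<longrightarrow> k < a \<longrightarrow> k \<le> b))"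
    and hi: "a = 2*m+1 \<or> (c \<in> {1..2*m} \<and> e i + e c < 0 \<and> (\<forall>k. k \<noteq> i \<longrightarrow> a \<le> k \<longrightarrow> c \<le> k))"
  shows "d i = 2*m+1-a-of_bool (a \<le> i) \<and> (\<forall>k\<in>{1..2*m}. k \<noteq> i \<longrightarrow> e i + e k \<noteq> 0)"
proof -
  have L: "e i + e k > 0" if k: "k \<in> {1..2*m}" "k \<noteq> i" "k < a" for k
  proof -
    from lo k have B: "b \<in> {1..2*m}" "e i + e b > 0" "k \<le> b" by auto
    then have "e b \<le> e k" using mono_le[of k b] k by auto
    then show ?thesis using B by linarith
  qed
  have H: "e i + e k < 0" if k: "k \<in> {1..2*m}" "k \<noteq> i" "a \<le> k" for k
  proof -
    from hi k have C: "c \<in> {1..2*m}" "e i + e c < 0" "c \<le> k" by auto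
    then have "e k \<le> e c" using mono_le[of c k] k by auto
    then show ?thesis using C by linarith
  qed
  have "S i = {a..2*m} - {i}"
  proof
    show "S i \<subseteq> {a..2*m} - {i}"
    proof
      fix k assume k: "k \<in> S i"
      then have "\<not> k < a" using L[of k] unfolding S_def by force
      then show "k \<in> {a..2*m} - {i}" using k unfolding S_def by auto
    qed
    show "{a..2*m} - {i} \<subseteq> S i"
    proof
      fix k assume k: "k \<in> {a..2*m} - {i}"
      then have "k \<in> {1..2*m}" using a by auto
      then show "k \<in> S i" using H[of k] k unfolding S_def by auto
    qed
  qed
  then have "d i = 2*m+1-a-of_bool (a \<le> i)" unfolding d_def using card_tail[of a i] a i by simp
  moreover have "\<forall>k\<in>{1..2*m}. k \<noteq> i \<longrightarrow> e i + e k \<noteq> 0"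
  proof (intro ballI impI)
    fix k assume "k \<in> {1..2*m}" "k \<noteq> i"
    then show "e i + e k \<noteq> 0" using L[of k] H[of k] by (cases "k < a") force+
  qed
  ultimately show ?thesis by blast
qed

lemma xpos:
  assumes j: "j \<le> 2*m"
    and lo: "j = 0 \<or> (j \<in> {1..2*m} \<and> e j - x > 0)"
    and hi: "j = 2*m \<or> (j+1 \<in> {1..2*m} \<and> 0 > e (j+1) - x)"
  shows "\<forall>i\<in>{1..2*m}. e i \<noteq> x \<and> (e i < x \<longleftrightarrow> j < i)"
proof
  fix i assume i: "i \<in> {1..2*m}"
  show "e i \<noteq> x \<and> (e i < x \<longleftrightarrow> j < i)"
  proof (cases "j < i")
    case True
    then have "j + 1 \<le> i" by simp
    then have "e i \<le> e (j+1)" using mono_le[of "j+1" i] i by auto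
    moreover have "0 > e (j+1) - x" using hi True i by auto
    ultimately show ?thesis using True by auto
  next
    case False
    then have "e j \<le> e i" using mono_le[of i j] i j by auto
    moreover have "e j - x > 0" using lo False i by auto
    ultimately show ?thesis using False by auto
  qed
qed

end


context cfg begin

lemma QA:
  assumes qa: "\<forall>i\<in>{1..m-1}. e i + e (2*m-i) > 0 \<and> 0 > e i + e (2*m+1-i)"
    and qm: "0 > e m + e (m+1)"
    and i: "i \<in> {1..2*m}"
  shows "d i = i - of_bool (m < i) \<and> (\<forall>k\<in>{1..2*m}. k \<noteq> i \<longrightarrow> e i + e k \<noteq> 0)"
proof -
  consider (a) "i \<le> m-1" | (b) "i = m" | (c) "m+1 \<le> i" by linarith
  then show ?thesis
  proof cases
    case a
    have 1: "e i + e (2*m-i) > 0" "0 > e i + e (2*m+1-i)" using qa a i by auto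
    have "d i = 2*m+1-(2*m+1-i)-of_bool (2*m+1-i \<le> i) \<and> (\<forall>k\<in>{1..2*m}. k \<noteq> i \<longrightarrow> e i + e k \<noteq> 0)"
      by (rule thr[OF i, of _ "2*m-i" "2*m+1-i"]) (use 1 a i m2 in auto)
    then show ?thesis using a m2 by (auto simp: of_bool_def)
  next
    case b
    have mm: "m-1 \<in> {1..m-1}" using m2 by simp
    have 1: "e (m-1) + e (2*m-(m-1)) > 0" using qa mm by blast
    have "2*m-(m-1) = m+1" using m2 by simp
    moreover have "e (m+1) < e m" using dec[of m] m2 by simp
    ultimately have 2: "e m + e (m-1) > 0" using 1 by simp
    have "d i = 2*m+1-(m+1)-of_bool (m+1 \<le> i) \<and> (\<forall>k\<in>{1..2*m}. k \<noteq> i \<longrightarrow> e i + e k \<noteq> 0)"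
      by (rule thr[OF i, of _ "m-1" "m+1"]) (use 2 qm b m2 in auto)
    then show ?thesis using b m2 by (auto simp: of_bool_def)
  next
    case c
    have hi: "e i + e (2*m+1-i) < 0"
    proof (cases "2*m+1-i \<le> m-1")
      case True
      have jj: "2*m+1-i \<in> {1..m-1}" using True i c by auto
      have "0 > e (2*m+1-i) + e (2*m+1-(2*m+1-i))" using qa jj by blast
      moreover have "2*m+1-(2*m+1-i) = i" using i by simp
      ultimately show ?thesis by simp
    next
      case False
      then have "i = m+1" using c m2 by simp
      then show ?thesis using qm by (simp add: add.commute)
    qed
    have lo: "2*m+1-i = 1 \<or> (2*m-i \<in> {1..2*m} \<and> e i + e (2*m-i) > 0 \<and> (\<forall>k. k \<noteq> i \<longrightarrow> k < 2*m+1-i \<longrightarrow> k \<le> 2*m-i))"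
    proof (cases "i = 2*m")
      case True then show ?thesis by simp
    next
      case False
      have jj: "2*m-i \<in> {1..m-1}" using False i c by auto
      have "e (2*m-i) + e (2*m-(2*m-i)) > 0" using qa jj by blast
      moreover have "2*m-(2*m-i) = i" using i by simp
      ultimately have "e i + e (2*m-i) > 0" by simp
      then show ?thesis using False i c by auto
    qed
    have "d i = 2*m+1-(2*m+1-i)-of_bool (2*m+1-i \<le> i) \<and> (\<forall>k\<in>{1..2*m}. k \<noteq> i \<longrightarrow> e i + e k \<noteq> 0)"
      by (rule thr[OF i _ _ lo, of "2*m+1-i"]) (use hi i c m2 in auto)
    then show ?thesis using c m2 i by (auto simp: of_bool_def)
  qed
qed

end


context cfg begin

lemma QB:
  assumes qb: "\<forall>i\<in>{1..m-1}. e i + e (2*m+1-i) > 0 \<and> 0 > e (i+1) + e (2*m+1-i)"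
    and qm: "e m + e (m+1) > 0"
    and i: "i \<in> {1..2*m}"
  shows "d i = i - 1 - of_bool (m < i) \<and> (\<forall>k\<in>{1..2*m}. k \<noteq> i \<longrightarrow> e i + e k \<noteq> 0)"
proof -
  consider (a) "i \<le> m" | (b) "i = m+1" | (c) "m+2 \<le> i" by linarith
  then show ?thesis
  proof cases
    case a
    have lo: "e i + e (2*m+1-i) > 0"
    proof (cases "i = m")
      case True then show ?thesis using qm by simp
    next
      case False
      then have jj: "i \<in> {1..m-1}" using a i by auto
      show ?thesis using qb jj by blast
    qed
    have hi: "2*m+2-i = 2*m+1 \<or> (2*m+2-i \<in> {1..2*m} \<and> e i + e (2*m+2-i) < 0 \<and> (\<forall>k. k \<noteq> i \<longrightarrow> 2*m+2-i \<le> k \<longrightarrow> 2*m+2-i \<le> k))"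
    proof (cases "i = 1")
      case True then show ?thesis by simp
    next
      case False
      then have jj: "i-1 \<in> {1..m-1}" using a i by auto
      have "0 > e ((i-1)+1) + e (2*m+1-(i-1))" using qb jj by blast
      moreover have "(i-1)+1 = i" "2*m+1-(i-1) = 2*m+2-i" using False i by auto
      ultimately show ?thesis using False i a m2 by auto
    qed
    have "d i = 2*m+1-(2*m+2-i)-of_bool (2*m+2-i \<le> i) \<and> (\<forall>k\<in>{1..2*m}. k \<noteq> i \<longrightarrow> e i + e k \<noteq> 0)"
      by (rule thr[OF i _ _ _ hi, of "2*m+1-i"]) (use lo a i m2 in auto)
    then show ?thesis using a m2 i by (auto simp: of_bool_def)
  next
    case b
    have mm: "m-1 \<in> {1..m-1}" using m2 by simp
    have "0 > e ((m-1)+1) + e (2*m+1-(m-1))" using qb mm by blast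
    moreover have "(m-1)+1 = m" "2*m+1-(m-1) = m+2" using m2 by auto
    moreover have "e (m+1) < e m" using dec[of m] m2 by simp
    ultimately have hi: "e (m+1) + e (m+2) < 0" by simp
    have "d i = 2*m+1-(m+1)-of_bool (m+1 \<le> i) \<and> (\<forall>k\<in>{1..2*m}. k \<noteq> i \<longrightarrow> e i + e k \<noteq> 0)"
      by (rule thr[OF i, of _ m "m+2"]) (use hi qm b m2 in \<open>auto simp: add.commute\<close>)
    then show ?thesis using b m2 by (auto simp: of_bool_def)
  next
    case c
    have jj: "2*m+1-i \<in> {1..m-1}" using c i by auto
    have 1: "e (2*m+1-i) + e (2*m+1-(2*m+1-i)) > 0" "0 > e ((2*m+1-i)+1) + e (2*m+1-(2*m+1-i))"
      using qb jj by blast+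
    have "2*m+1-(2*m+1-i) = i" "(2*m+1-i)+1 = 2*m+2-i" using i by auto
    then have lo: "e i + e (2*m+1-i) > 0" and hi: "e i + e (2*m+2-i) < 0" using 1 by simp_all
    have "d i = 2*m+1-(2*m+2-i)-of_bool (2*m+2-i \<le> i) \<and> (\<forall>k\<in>{1..2*m}. k \<noteq> i \<longrightarrow> e i + e k \<noteq> 0)"
      by (rule thr[OF i, of _ "2*m+1-i" "2*m+2-i"]) (use lo hi i c m2 in auto)
    then show ?thesis using c m2 i by (auto simp: of_bool_def)
  qed
qed

lemma QC:
  assumes qc: "\<forall>i\<in>{1..m-1}. e i + e (2*m-1-i) > 0 \<and> 0 > e i + e (2*m-i)"
    and i: "i \<in> {1..2*m}"
  shows "d i = i + 1 - of_bool (m \<le> i) - of_bool (i = 2*m) \<and> (\<forall>k\<in>{1..2*m}. k \<noteq> i \<longrightarrow> e i + e k \<noteq> 0)"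
proof -
  consider (a) "i \<le> m-1" | (b) "i = m" | (c) "m+1 \<le> i" "i \<le> 2*m-1" | (z) "i = 2*m" using i m2 unfolding atLeastAtMost_iff by linarith
  then show ?thesis
  proof cases
    case a
    have 1: "e i + e (2*m-1-i) > 0" "0 > e i + e (2*m-i)" using qc a i by auto
    have "d i = 2*m+1-(2*m-i)-of_bool (2*m-i \<le> i) \<and> (\<forall>k\<in>{1..2*m}. k \<noteq> i \<longrightarrow> e i + e k \<noteq> 0)"
      by (rule thr[OF i, of _ "2*m-1-i" "2*m-i"]) (use 1 a i m2 in auto)
    then show ?thesis using a m2 by (auto simp: of_bool_def)
  next
    case b
    have mm: "m-1 \<in> {1..m-1}" using m2 by simp
    have 1: "e (m-1) + e (2*m-1-(m-1)) > 0" "0 > e (m-1) + e (2*m-(m-1))" using qc mm by blast+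
    have "2*m-1-(m-1) = m" "2*m-(m-1) = m+1" using m2 by auto
    moreover have "e m < e (m-1)" using dec[of "m-1"] m2 by simp
    ultimately have lo: "e m + e (m-1) > 0" and hi: "e m + e (m+1) < 0" using 1 by simp_all
    have "d i = 2*m+1-(m+1)-of_bool (m+1 \<le> i) \<and> (\<forall>k\<in>{1..2*m}. k \<noteq> i \<longrightarrow> e i + e k \<noteq> 0)"
      by (rule thr[OF i, of _ "m-1" "m+1"]) (use lo hi b m2 in auto)
    then show ?thesis using b m2 by (auto simp: of_bool_def)
  next
    case c
    have jj: "2*m-i \<in> {1..m-1}" using c by auto
    have "0 > e (2*m-i) + e (2*m-(2*m-i))" using qc jj by blast
    moreover have "2*m-(2*m-i) = i" using c by auto
    ultimately have hi: "e i + e (2*m-i) < 0" by simp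
    have lo: "2*m-i = 1 \<or> (2*m-1-i \<in> {1..2*m} \<and> e i + e (2*m-1-i) > 0 \<and> (\<forall>k. k \<noteq> i \<longrightarrow> k < 2*m-i \<longrightarrow> k \<le> 2*m-1-i))"
    proof (cases "i = 2*m-1")
      case True then show ?thesis using m2 by simp
    next
      case False
      have jj: "2*m-1-i \<in> {1..m-1}" using False c by auto
      have "e (2*m-1-i) + e (2*m-1-(2*m-1-i)) > 0" using qc jj by blast
      moreover have "2*m-1-(2*m-1-i) = i" using c by auto
      ultimately have "e i + e (2*m-1-i) > 0" by simp
      then show ?thesis using False c by auto
    qed
    have "d i = 2*m+1-(2*m-i)-of_bool (2*m-i \<le> i) \<and> (\<forall>k\<in>{1..2*m}. k \<noteq> i \<longrightarrow> e i + e k \<noteq> 0)"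
      by (rule thr[OF i _ _ lo, of "2*m-i"]) (use hi c m2 in auto)
    then show ?thesis using c m2 by (auto simp: of_bool_def)
  next
    case z
    have one: "1 \<in> {1..m-1}" using m2 by simp
    have "0 > e 1 + e (2*m-1)" using qc one by auto
    moreover have "e (2*m) < e (2*m-1)" using dec[of "2*m-1"] m2 by simp
    ultimately have hi: "e i + e 1 < 0" using z by simp
    have "d i = 2*m+1-1-of_bool (1 \<le> i) \<and> (\<forall>k\<in>{1..2*m}. k \<noteq> i \<longrightarrow> e i + e k \<noteq> 0)"
      by (rule thr[OF i, of _ 1 1]) (use hi z m2 in auto)
    then show ?thesis using z m2 by (auto simp: of_bool_def)
  qed
qed

lemma QD:
  assumes qd: "\<forall>i\<in>{2..m}. e i + e (2*m+2-i) > 0 \<and> 0 > e (i+1) + e (2*m+2-i)"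
    and i: "i \<in> {1..2*m}"
  shows "d i = i - 1 - of_bool (2 \<le> i) - of_bool (m+2 \<le> i) \<and> (\<forall>k\<in>{1..2*m}. k \<noteq> i \<longrightarrow> e i + e k \<noteq> 0)"
proof -
  have two: "2 \<in> {2..m}" using m2 by simp
  have q2: "e 2 + e (2*m+2-2) > 0" using qd two by blast
  consider (a) "i \<le> 2" | (b) "3 \<le> i" "i \<le> m" | (c) "i = m+1" | (z) "m+2 \<le> i" using i unfolding atLeastAtMost_iff by linarith
  then show ?thesis
  proof cases
    case a
    have "e 2 \<le> e i" using mono_le[of i 2] a i m2 by auto
    then have lo: "e i + e (2*m) > 0" using q2 by simp
    have "d i = 2*m+1-(2*m+1)-of_bool (2*m+1 \<le> i) \<and> (\<forall>k\<in>{1..2*m}. k \<noteq> i \<longrightarrow> e i + e k \<noteq> 0)"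
      by (rule thr[OF i, of _ "2*m" 0]) (use lo a m2 in auto)
    then show ?thesis using a m2 i by (auto simp: of_bool_def)
  next
    case b
    have j1: "i \<in> {2..m}" "i-1 \<in> {2..m}" using b by auto
    have lo: "e i + e (2*m+2-i) > 0" using qd j1 by blast
    have "0 > e ((i-1)+1) + e (2*m+2-(i-1))" using qd j1 by blast
    moreover have "(i-1)+1 = i" "2*m+2-(i-1) = 2*m+3-i" using b by auto
    ultimately have hi: "e i + e (2*m+3-i) < 0" by metis
    have "d i = 2*m+1-(2*m+3-i)-of_bool (2*m+3-i \<le> i) \<and> (\<forall>k\<in>{1..2*m}. k \<noteq> i \<longrightarrow> e i + e k \<noteq> 0)"
      by (rule thr[OF i, of _ "2*m+2-i" "2*m+3-i"]) (use lo hi b m2 in auto)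
    then show ?thesis using b m2 by (auto simp: of_bool_def)
  next
    case c
    have jm: "m \<in> {2..m}" using m2 by simp
    have 1: "e m + e (2*m+2-m) > 0" "0 > e (m+1) + e (2*m+2-m)" using qd jm by blast+
    have "2*m+2-m = m+2" by simp
    moreover have "e (m+2) < e (m+1)" using dec[of "m+1"] m2 by simp
    ultimately have lo: "e (m+1) + e m > 0" and hi: "e (m+1) + e (m+2) < 0" using 1 by simp_all
    have "d i = 2*m+1-(m+2)-of_bool (m+2 \<le> i) \<and> (\<forall>k\<in>{1..2*m}. k \<noteq> i \<longrightarrow> e i + e k \<noteq> 0)"
      by (rule thr[OF i, of _ m "m+2"]) (use lo hi c m2 in auto)
    then show ?thesis using c m2 by (auto simp: of_bool_def)
  next
    case z
    have jj: "2*m+2-i \<in> {2..m}" using z i by auto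
    have 1: "e (2*m+2-i) + e (2*m+2-(2*m+2-i)) > 0" "0 > e ((2*m+2-i)+1) + e (2*m+2-(2*m+2-i))"
      using qd jj by blast+
    have "2*m+2-(2*m+2-i) = i" "(2*m+2-i)+1 = 2*m+3-i" using i z by auto
    then have lo: "e i + e (2*m+2-i) > 0" and hi: "e i + e (2*m+3-i) < 0" using 1 by simp_all
    have "d i = 2*m+1-(2*m+3-i)-of_bool (2*m+3-i \<le> i) \<and> (\<forall>k\<in>{1..2*m}. k \<noteq> i \<longrightarrow> e i + e k \<noteq> 0)"
      by (rule thr[OF i, of _ "2*m+2-i" "2*m+3-i"]) (use lo hi i z m2 in auto)
    then show ?thesis using z m2 i by (auto simp: of_bool_def)
  qed
qed

end


context cfg begin

lemma sig_from:
  assumes qnd: "\<forall>i\<in>{1..2*m}. \<forall>k\<in>{1..2*m}. k \<noteq> i \<longrightarrow> e i + e k \<noteq> 0"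
    and xu: "\<forall>i\<in>{1..2*m}. e i \<noteq> u \<and> (e i < u \<longleftrightarrow> JU < i)"
    and xw: "\<forall>i\<in>{1..2*m}. e i \<noteq> w \<and> (e i < w \<longleftrightarrow> JW < i)"
    and dd: "\<And>i. i \<in> {1..2*m} \<Longrightarrow> i - 1 + d i + (of_bool (JU < i) + of_bool (JW < i)) = N i"
  shows "nondeg \<and> (\<forall>i\<in>{1..2*m}. sig i = (-1) ^ N i)"
proof -
  have nd: nondeg unfolding nondeg_def using qnd xu xw by blast
  have "sig i = (-1) ^ N i" if i: "i \<in> {1..2*m}" for i
  proof -
    have "P i = of_bool (JU < i) + of_bool (JW < i)" unfolding P_def using xu xw i by auto
    then show ?thesis using sig_formula[OF nd i] dd[OF i] by (simp add: add.assoc)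
  qed
  then show ?thesis using nd by blast
qed

lemma back1: "sys1 \<Longrightarrow> nondeg \<and> (\<forall>i\<in>{1..2*m}. sig i = 1)"
proof -
  assume s: sys1
  have qc: "\<forall>i\<in>{1..m-1}. e i + e (2*m-1-i) > 0 \<and> 0 > e i + e (2*m-i)" using s unfolding sys1_def by blast
  have xu: "\<forall>i\<in>{1..2*m}. e i \<noteq> u \<and> (e i < u \<longleftrightarrow> m-1 < i)"
    by (rule xpos) (use s m2 in \<open>auto simp: sys1_def\<close>)
  have xw: "\<forall>i\<in>{1..2*m}. e i \<noteq> w \<and> (e i < w \<longleftrightarrow> 2*m-1 < i)"
  proof (rule xpos)
    have "2*m-1+1 = 2*m" using m2 by simp
    then show "2*m-1 = 2*m \<or> (2*m-1+1 \<in> {1..2*m} \<and> 0 > e (2*m-1+1) - w)" using s m2 by (auto simp: sys1_def)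
  qed (use s m2 in \<open>auto simp: sys1_def\<close>)
  have "nondeg \<and> (\<forall>i\<in>{1..2*m}. sig i = (-1) ^ (2*i))"
  proof (rule sig_from[OF _ xu xw])
    show "\<forall>i\<in>{1..2*m}. \<forall>k\<in>{1..2*m}. k \<noteq> i \<longrightarrow> e i + e k \<noteq> 0" using QC[OF qc] by blast
    fix i assume i: "i \<in> {1..2*m}"
    show "i - 1 + d i + (of_bool (m-1 < i) + of_bool (2*m-1 < i)) = 2*i"
      using QC[OF qc i] i m2 by (auto simp: of_bool_def)
  qed
  then show ?thesis by simp
qed

lemma back2: "sys2 \<Longrightarrow> nondeg \<and> (\<forall>i\<in>{1..2*m}. sig i = 1)"
proof -
  assume s: sys2
  have qa: "\<forall>i\<in>{1..m-1}. e i + e (2*m-i) > 0 \<and> 0 > e i + e (2*m+1-i)" and qm: "0 > e m + e (m+1)"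
    using s unfolding sys2_def by blast+
  have xu: "\<forall>i\<in>{1..2*m}. e i \<noteq> u \<and> (e i < u \<longleftrightarrow> 0 < i)"
    by (rule xpos) (use s m2 in \<open>auto simp: sys2_def\<close>)
  have xw: "\<forall>i\<in>{1..2*m}. e i \<noteq> w \<and> (e i < w \<longleftrightarrow> m < i)"
    by (rule xpos) (use s m2 in \<open>auto simp: sys2_def\<close>)
  have "nondeg \<and> (\<forall>i\<in>{1..2*m}. sig i = (-1) ^ (2*i))"
  proof (rule sig_from[OF _ xu xw])
    show "\<forall>i\<in>{1..2*m}. \<forall>k\<in>{1..2*m}. k \<noteq> i \<longrightarrow> e i + e k \<noteq> 0" using QA[OF qa qm] by blast
    fix i assume i: "i \<in> {1..2*m}"
    show "i - 1 + d i + (of_bool (0 < i) + of_bool (m < i)) = 2*i"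
      using QA[OF qa qm i] i m2 by (auto simp: of_bool_def)
  qed
  then show ?thesis by simp
qed

lemma back3: "sys3 \<Longrightarrow> nondeg \<and> (\<forall>i\<in>{1..2*m}. sig i = -1)"
proof -
  assume s: sys3
  have qb: "\<forall>i\<in>{1..m-1}. e i + e (2*m+1-i) > 0 \<and> 0 > e (i+1) + e (2*m+1-i)" and qm: "e m + e (m+1) > 0"
    using s unfolding sys3_def by blast+
  have xu: "\<forall>i\<in>{1..2*m}. e i \<noteq> u \<and> (e i < u \<longleftrightarrow> 0 < i)"
    by (rule xpos) (use s m2 in \<open>auto simp: sys3_def\<close>)
  have xw: "\<forall>i\<in>{1..2*m}. e i \<noteq> w \<and> (e i < w \<longleftrightarrow> m < i)"
    by (rule xpos) (use s m2 in \<open>auto simp: sys3_def\<close>)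
  have "nondeg \<and> (\<forall>i\<in>{1..2*m}. sig i = (-1) ^ (2*(i-1)+1))"
  proof (rule sig_from[OF _ xu xw])
    show "\<forall>i\<in>{1..2*m}. \<forall>k\<in>{1..2*m}. k \<noteq> i \<longrightarrow> e i + e k \<noteq> 0" using QB[OF qb qm] by blast
    fix i assume i: "i \<in> {1..2*m}"
    show "i - 1 + d i + (of_bool (0 < i) + of_bool (m < i)) = 2*(i-1)+1"
      using QB[OF qb qm i] i m2 by (auto simp: of_bool_def)
  qed
  then show ?thesis by simp
qed

lemma back4: "sys4 \<Longrightarrow> nondeg \<and> (\<forall>i\<in>{1..2*m}. sig i = 1)"
proof -
  assume s: sys4
  have qd: "\<forall>i\<in>{2..m}. e i + e (2*m+2-i) > 0 \<and> 0 > e (i+1) + e (2*m+2-i)"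
    using s unfolding sys4_def by blast
  have xu: "\<forall>i\<in>{1..2*m}. e i \<noteq> u \<and> (e i < u \<longleftrightarrow> 1 < i)"
    by (rule xpos) (use s m2 in \<open>auto simp: sys4_def numeral_2_eq_2\<close>)
  have xw: "\<forall>i\<in>{1..2*m}. e i \<noteq> w \<and> (e i < w \<longleftrightarrow> m+1 < i)"
    by (rule xpos) (use s m2 in \<open>auto simp: sys4_def\<close>)
  have "nondeg \<and> (\<forall>i\<in>{1..2*m}. sig i = (-1) ^ (2*(i-1)))"
  proof (rule sig_from[OF _ xu xw])
    show "\<forall>i\<in>{1..2*m}. \<forall>k\<in>{1..2*m}. k \<noteq> i \<longrightarrow> e i + e k \<noteq> 0" using QD[OF qd] by blast
    fix i assume i: "i \<in> {1..2*m}"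
    show "i - 1 + d i + (of_bool (1 < i) + of_bool (m+1 < i)) = 2*(i-1)"
      using QD[OF qd i] i m2 by (auto simp: of_bool_def)
  qed
  then show ?thesis by simp
qed

lemma back5: "sys5 \<Longrightarrow> nondeg \<and> (\<forall>i\<in>{1..2*m}. sig i = 1)"
proof -
  assume s: sys5
  have qb: "\<forall>i\<in>{1..m-1}. e i + e (2*m+1-i) > 0 \<and> 0 > e (i+1) + e (2*m+1-i)" and qm: "e m + e (m+1) > 0"
    using s unfolding sys5_def by blast+
  have xu: "\<forall>i\<in>{1..2*m}. e i \<noteq> u \<and> (e i < u \<longleftrightarrow> m < i)"
    by (rule xpos) (use s m2 in \<open>auto simp: sys5_def\<close>)
  have xw: "\<forall>i\<in>{1..2*m}. e i \<noteq> w \<and> (e i < w \<longleftrightarrow> 2*m < i)"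
    by (rule xpos) (use s m2 in \<open>auto simp: sys5_def\<close>)
  have "nondeg \<and> (\<forall>i\<in>{1..2*m}. sig i = (-1) ^ (2*(i-1)))"
  proof (rule sig_from[OF _ xu xw])
    show "\<forall>i\<in>{1..2*m}. \<forall>k\<in>{1..2*m}. k \<noteq> i \<longrightarrow> e i + e k \<noteq> 0" using QB[OF qb qm] by blast
    fix i assume i: "i \<in> {1..2*m}"
    show "i - 1 + d i + (of_bool (m < i) + of_bool (2*m < i)) = 2*(i-1)"
      using QB[OF qb qm i] i m2 by (auto simp: of_bool_def)
  qed
  then show ?thesis by simp
qed

lemma back6: "sys6 \<Longrightarrow> nondeg \<and> (\<forall>i\<in>{1..2*m}. sig i = -1)"
proof -
  assume s: sys6
  have qa: "\<forall>i\<in>{1..m-1}. e i + e (2*m-i) > 0 \<and> 0 > e i + e (2*m+1-i)" and qm: "0 > e m + e (m+1)"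
    using s unfolding sys6_def by blast+
  have xu: "\<forall>i\<in>{1..2*m}. e i \<noteq> u \<and> (e i < u \<longleftrightarrow> m < i)"
    by (rule xpos) (use s m2 in \<open>auto simp: sys6_def\<close>)
  have xw: "\<forall>i\<in>{1..2*m}. e i \<noteq> w \<and> (e i < w \<longleftrightarrow> 2*m < i)"
    by (rule xpos) (use s m2 in \<open>auto simp: sys6_def\<close>)
  have "nondeg \<and> (\<forall>i\<in>{1..2*m}. sig i = (-1) ^ (2*(i-1)+1))"
  proof (rule sig_from[OF _ xu xw])
    show "\<forall>i\<in>{1..2*m}. \<forall>k\<in>{1..2*m}. k \<noteq> i \<longrightarrow> e i + e k \<noteq> 0" using QA[OF qa qm] by blast
    fix i assume i: "i \<in> {1..2*m}"
    show "i - 1 + d i + (of_bool (m < i) + of_bool (2*m < i)) = 2*(i-1)+1"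
      using QA[OF qa qm i] i m2 by (auto simp: of_bool_def)
  qed
  then show ?thesis by simp
qed

end


lemma refl_sum: "a \<le> b \<Longrightarrow> b \<le> (s::nat) \<Longrightarrow> (\<Sum>i=a..b. f (s - i)) = (\<Sum>j=s-b..s-a. (f j :: real))"
  apply (rule sum.reindex_bij_witness[where i="\<lambda>j. s - j" and j="\<lambda>i. s - i"])
  apply (simp_all add: atLeastAtMost_iff)
  apply linarith+
  done

lemma split_sum: "a \<le> k+1 \<Longrightarrow> k \<le> b \<Longrightarrow> sum f {a..b} = sum f {a..k} + sum (f :: nat \<Rightarrow> real) {k+1..b}"
proof -
  assume h: "a \<le> k+1" "k \<le> b"
  have "b = k + (b - k)" using h by simp
  then have "sum f {a..b} = sum f {a..k + (b-k)}" by simp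
  also have "\<dots> = sum f {a..k} + sum f {k+1..k + (b-k)}" by (rule sum.ub_add_nat[OF h(1)])
  finally show ?thesis using h by simp
qed

lemma PA:
  fixes f :: "nat \<Rightarrow> real"
  shows "(\<Sum>i=1..2*m. f i) = (\<Sum>i=1..m. f i + f (2*m+1-i))"
proof (cases "m = 0")
  case True then show ?thesis by simp
next
  case False
  have "(\<Sum>i=1..2*m. f i) = (\<Sum>i=1..m. f i) + (\<Sum>i=m+1..2*m. f i)" by (rule split_sum) auto
  moreover have "(\<Sum>i=1..m. f (2*m+1-i)) = (\<Sum>i=m+1..2*m. f i)" using refl_sum[of 1 m "2*m+1" f] False by simp
  ultimately show ?thesis by (simp add: sum.distrib)
qed

lemma PC:
  fixes f :: "nat \<Rightarrow> real"
  assumes "m \<ge> 2"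
  shows "(\<Sum>i=1..2*m. f i) = (\<Sum>i=1..m-1. f i + f (2*m-i)) + f m + f (2*m)"
proof -
  have 1: "(\<Sum>i=1..2*m. f i) = (\<Sum>i=1..m-1. f i) + (\<Sum>i=m..2*m. f i)"
    using split_sum[of 1 "m-1" "2*m" f] assms by simp
  have 2: "(\<Sum>i=m..2*m. f i) = (\<Sum>i=m..m. f i) + (\<Sum>i=m+1..2*m. f i)"
    using split_sum[of m m "2*m" f] assms by simp
  have 3: "(\<Sum>i=m+1..2*m. f i) = (\<Sum>i=m+1..2*m-1. f i) + (\<Sum>i=2*m..2*m. f i)"
    using split_sum[of "m+1" "2*m-1" "2*m" f] assms by simp
  have 4: "(\<Sum>i=1..m-1. f (2*m-i)) = (\<Sum>i=m+1..2*m-1. f i)"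
    using refl_sum[of 1 "m-1" "2*m" f] assms by (simp add: Suc_diff_le numeral_2_eq_2)
  show ?thesis using 1 2 3 4 by (simp add: sum.distrib)
qed

lemma PD:
  fixes f :: "nat \<Rightarrow> real"
  assumes "m \<ge> 2"
  shows "(\<Sum>i=1..2*m. f i) = f 1 + f (m+1) + (\<Sum>i=2..m. f i + f (2*m+2-i))"
proof -
  have 1: "(\<Sum>i=1..2*m. f i) = (\<Sum>i=1..1. f i) + (\<Sum>i=2..2*m. f i)"
    by (subst split_sum[of 1 1 "2*m" f]) (use assms in \<open>auto simp: numeral_2_eq_2\<close>)
  have 2: "(\<Sum>i=2..2*m. f i) = (\<Sum>i=2..m. f i) + (\<Sum>i=m+1..2*m. f i)"
    by (subst split_sum[of 2 m "2*m" f]) (use assms in auto)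
  have 3: "(\<Sum>i=m+1..2*m. f i) = (\<Sum>i=m+1..m+1. f i) + (\<Sum>i=m+2..2*m. f i)"
    by (subst split_sum[of "m+1" "m+1" "2*m" f]) (use assms in auto)
  have 4: "(\<Sum>i=2..m. f (2*m+2-i)) = (\<Sum>i=m+2..2*m. f i)"
    using refl_sum[of 2 m "2*m+2" f] assms by simp
  show ?thesis using 1 2 3 4 by (simp add: sum.distrib)
qed

context cfg begin

lemma sumneg: "finite A \<Longrightarrow> A \<noteq> {} \<Longrightarrow> (\<And>x. x \<in> A \<Longrightarrow> g x < (0::real)) \<Longrightarrow> sum g A < 0"
  using sum_strict_mono[of A g "\<lambda>_. 0"] by simp
lemma sumpos: "finite A \<Longrightarrow> A \<noteq> {} \<Longrightarrow> (\<And>x. x \<in> A \<Longrightarrow> g x > (0::real)) \<Longrightarrow> sum g A > 0"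
  using sum_strict_mono[of A "\<lambda>_. 0" g] by simp

lemma QAsum: "(\<forall>i\<in>{1..m-1}. e i + e (2*m-i) > 0 \<and> 0 > e i + e (2*m+1-i)) \<Longrightarrow> 0 > e m + e (m+1) \<Longrightarrow> (\<Sum>i=1..2*m. e i) < 0"
proof -
  assume q: "\<forall>i\<in>{1..m-1}. e i + e (2*m-i) > 0 \<and> 0 > e i + e (2*m+1-i)" and qm: "0 > e m + e (m+1)"
  have "(\<Sum>i=1..m. e i + e (2*m+1-i)) < 0"
  proof (rule sumneg)
    fix i assume i: "i \<in> {1..m}"
    show "e i + e (2*m+1-i) < 0"
    proof (cases "i = m")
      case True then show ?thesis using qm by (simp add: add.commute)
    next
      case False then show ?thesis using q i by auto
    qed
  qed (use m2 in auto)
  then show ?thesis using PA[where f=e and m=m] by simp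
qed

lemma QBsum: "(\<forall>i\<in>{1..m-1}. e i + e (2*m+1-i) > 0 \<and> 0 > e (i+1) + e (2*m+1-i)) \<Longrightarrow> e m + e (m+1) > 0 \<Longrightarrow> (\<Sum>i=1..2*m. e i) > 0"
proof -
  assume q: "\<forall>i\<in>{1..m-1}. e i + e (2*m+1-i) > 0 \<and> 0 > e (i+1) + e (2*m+1-i)" and qm: "e m + e (m+1) > 0"
  have "(\<Sum>i=1..m. e i + e (2*m+1-i)) > 0"
  proof (rule sumpos)
    fix i assume i: "i \<in> {1..m}"
    show "e i + e (2*m+1-i) > 0"
    proof (cases "i = m")
      case True then show ?thesis using qm by (simp add: add.commute)
    next
      case False then show ?thesis using q i by auto
    qed
  qed (use m2 in auto)
  then show ?thesis using PA[where f=e and m=m] by simp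
qed

lemma ord_sys1: "sys1 \<Longrightarrow> (\<Sum>i=1..2*m. e i) < u + w \<and> u + w < 0"
proof -
  assume s: sys1
  have q: "\<forall>i\<in>{1..m-1}. e i + e (2*m-1-i) > 0 \<and> 0 > e i + e (2*m-i)" using s unfolding sys1_def by blast
  have "(\<Sum>i=1..m-1. e i + e (2*m-i)) \<le> 0"
  proof (rule sum_nonpos)
    fix i assume "i \<in> {1..m-1}"
    then have "0 > e i + e (2*m-i)" using q by blast
    then show "e i + e (2*m-i) \<le> 0" by simp
  qed
  moreover have "e m < u" "e (2*m) < w" using s unfolding sys1_def by auto
  ultimately have A: "(\<Sum>i=1..2*m. e i) < u + w" using PC[where f=e, OF m2] by simp
  have mm: "m-1 \<in> {1..m-1}" using m2 by simp
  have "0 > e (m-1) + e (2*m-(m-1))" using q mm by blast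
  moreover have "2*m-(m-1) = m+1" using m2 by simp
  moreover have "e (2*m-1) \<le> e (m+1)" using mono_le[of "m+1" "2*m-1"] m2 by simp
  moreover have "u < e (m-1)" "w < e (2*m-1)" using s unfolding sys1_def by auto
  ultimately have "u + w < 0" by simp
  then show ?thesis using A by simp
qed

lemma ord_sys2: "sys2 \<Longrightarrow> (\<Sum>i=1..2*m. e i) < 0 \<and> 0 < u + w"
proof -
  assume s: sys2
  have q: "\<forall>i\<in>{1..m-1}. e i + e (2*m-i) > 0 \<and> 0 > e i + e (2*m+1-i)" and qm: "0 > e m + e (m+1)"
    using s unfolding sys2_def by blast+
  have one: "1 \<in> {1..m-1}" using m2 by simp
  have "e 1 + e (2*m-1) > 0" using q one by auto
  moreover have "e (2*m-1) \<le> e (m+1)" using mono_le[of "m+1" "2*m-1"] m2 by simp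
  moreover have "e 1 < u" "e (m+1) < w" using s unfolding sys2_def by auto
  ultimately have "0 < u + w" by simp
  then show ?thesis using QAsum[OF q qm] by simp
qed

lemma ord_sys3: "sys3 \<Longrightarrow> 0 < (\<Sum>i=1..2*m. e i) \<and> (\<Sum>i=1..2*m. e i) < u + w"
proof -
  assume s: sys3
  have q: "\<forall>i\<in>{1..m-1}. e i + e (2*m+1-i) > 0 \<and> 0 > e (i+1) + e (2*m+1-i)" and qm: "e m + e (m+1) > 0"
    using s unfolding sys3_def by blast+
  have "(\<Sum>i=2..m. e i + e (2*m+2-i)) \<le> 0"
  proof (rule sum_nonpos)
    fix i assume i: "i \<in> {2..m}"
    then have jj: "i-1 \<in> {1..m-1}" by auto
    have "0 > e ((i-1)+1) + e (2*m+1-(i-1))" using q jj by blast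
    moreover have "(i-1)+1 = i" "2*m+1-(i-1) = 2*m+2-i" using i by auto
    ultimately show "e i + e (2*m+2-i) \<le> 0" by (metis less_imp_le)
  qed
  moreover have "e 1 < u" "e (m+1) < w" using s unfolding sys3_def by auto
  ultimately have "(\<Sum>i=1..2*m. e i) < u + w" using PD[where f=e, OF m2] by simp
  then show ?thesis using QBsum[OF q qm] by simp
qed

lemma ord_sys4: "sys4 \<Longrightarrow> 0 < u + w \<and> u + w < (\<Sum>i=1..2*m. e i)"
proof -
  assume s: sys4
  have q: "\<forall>i\<in>{2..m}. e i + e (2*m+2-i) > 0 \<and> 0 > e (i+1) + e (2*m+2-i)" using s unfolding sys4_def by blast
  have two: "2 \<in> {2..m}" using m2 by simp
  have "e 2 + e (2*m+2-2) > 0" using q two by blast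
  moreover have "e (2*m) \<le> e (m+2)" using mono_le[of "m+2" "2*m"] m2 by simp
  moreover have "u > e 2" "w > e (m+2)" using s unfolding sys4_def by auto
  ultimately have A: "0 < u + w" by simp
  have "(\<Sum>i=2..m. e i + e (2*m+2-i)) \<ge> 0"
  proof (rule sum_nonneg)
    fix i assume "i \<in> {2..m}"
    then have "e i + e (2*m+2-i) > 0" using q by blast
    then show "e i + e (2*m+2-i) \<ge> 0" by simp
  qed
  moreover have "e 1 > u" "e (m+1) > w" using s unfolding sys4_def by auto
  ultimately have "u + w < (\<Sum>i=1..2*m. e i)" using PD[where f=e, OF m2] by simp
  then show ?thesis using A by simp
qed

lemma ord_sys5: "sys5 \<Longrightarrow> u + w < 0 \<and> 0 < (\<Sum>i=1..2*m. e i)"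
proof -
  assume s: sys5
  have q: "\<forall>i\<in>{1..m-1}. e i + e (2*m+1-i) > 0 \<and> 0 > e (i+1) + e (2*m+1-i)" and qm: "e m + e (m+1) > 0"
    using s unfolding sys5_def by blast+
  have mm: "m-1 \<in> {1..m-1}" using m2 by simp
  have "0 > e ((m-1)+1) + e (2*m+1-(m-1))" using q mm by blast
  moreover have "(m-1)+1 = m" "2*m+1-(m-1) = m+2" using m2 by auto
  moreover have "e (2*m) \<le> e (m+2)" using mono_le[of "m+2" "2*m"] m2 by simp
  moreover have "u < e m" "w < e (2*m)" using s unfolding sys5_def by auto
  ultimately have "u + w < 0" by simp
  then show ?thesis using QBsum[OF q qm] by simp
qed

lemma ord_sys6: "sys6 \<Longrightarrow> (\<Sum>i=1..2*m. e i) < 0 \<and> u + w < (\<Sum>i=1..2*m. e i)"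
proof -
  assume s: sys6
  have q: "\<forall>i\<in>{1..m-1}. e i + e (2*m-i) > 0 \<and> 0 > e i + e (2*m+1-i)" and qm: "0 > e m + e (m+1)"
    using s unfolding sys6_def by blast+
  have "(\<Sum>i=1..m-1. e i + e (2*m-i)) \<ge> 0"
  proof (rule sum_nonneg)
    fix i assume "i \<in> {1..m-1}"
    then have "e i + e (2*m-i) > 0" using q by blast
    then show "e i + e (2*m-i) \<ge> 0" by simp
  qed
  moreover have "u < e m" "w < e (2*m)" using s unfolding sys6_def by auto
  ultimately have "u + w < (\<Sum>i=1..2*m. e i)" using PC[where f=e, OF m2] by simp
  then show ?thesis using QAsum[OF q qm] by simp
qed

lemma comb_eps:
  assumes h: "\<forall>i\<in>{1..2*m}. sig i = eps" and eps: "eps = 1 \<or> eps = -1"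
  shows "(eps = 1 \<and> (sys1 \<or> sys2 \<or> sys4 \<or> sys5)) \<or> (eps = -1 \<and> (sys3 \<or> sys6))"
proof -
  have nz: "\<forall>i\<in>{1..2*m}. sig i \<noteq> 0" using h eps by auto
  have nd: nondeg by (rule sig_nondeg[OF nz])
  have one: "1 \<in> {1..2*m}" using m2 by auto
  have s1: "sig 1 = (-1) ^ (d 1 + P 1)" using sig_formula[OF nd one] by simp
  have par: "\<forall>i\<in>{1..2*m}. even (i - 1 + h i) = even (h 1)"
  proof
    fix i assume i: "i \<in> {1..2*m}"
    have "(-1::real) ^ (i - 1 + d i + P i) = (-1) ^ (d 1 + P 1)" using sig_formula[OF nd i] s1 h i one by simp
    then have "even (i - 1 + d i + P i) = even (d 1 + P 1)" by (rule neg1_pow_eq)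
    then show "even (i - 1 + h i) = even (h 1)" unfolding h_def by (simp add: add.assoc)
  qed
  have e1: "sig 1 = eps" using h one by blast
  from forward[OF nd par] show ?thesis
  proof (elim disjE conjE)
  qed (use s1 e1 eps in auto)
qed

end


locale la =
  fixes m :: nat and a1 a2 b2 b3 :: real and c :: "nat \<Rightarrow> real"
  assumes cdist: "\<And>k l. 1 \<le> k \<Longrightarrow> k \<le> 2*m \<Longrightarrow> 1 \<le> l \<Longrightarrow> l \<le> 2*m \<Longrightarrow> k \<noteq> l \<Longrightarrow> c k \<noteq> c l"
begin

abbreviation C where "C \<equiv> Cmat m a1 a2 b2 b3 c"
abbreviation V where "V \<equiv> evec m a1 a2 b2 b3 c"

definition EV :: "nat \<Rightarrow> (nat \<Rightarrow> real) \<Rightarrow> bool" where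
  "EV i v \<longleftrightarrow> v \<in> Vsp m
      \<and> (\<forall>r\<in>{1..2*m}. (\<Sum>s=1..2*m. C r s * v s) = c i * v r)
      \<and> (\<forall>r\<in>{1..2*m-i}. v r = 0) \<and> v (2*m+1-i) = 1"

lemma C_upper: "r < s \<Longrightarrow> C r s = 0"
  unfolding Cmat_def by auto

lemma C_diag: "1 \<le> r \<Longrightarrow> r \<le> 2*m \<Longrightarrow> C r r = c (2*m+1-r)"
proof -
  assume r: "1 \<le> r" "r \<le> 2*m"
  consider "r = 1" | "2 \<le> r" "r \<le> m" | "m+1 \<le> r" using r by linarith
  then show ?thesis
  proof cases
    case 1 then show ?thesis unfolding Cmat_def by simp
  next
    case 2
    then have "2*m - (r-1) = 2*m+1-r" by simp
    then show ?thesis using 2 unfolding Cmat_def by auto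
  next
    case 3
    then have "m+1 - (r-m) = 2*m+1-r" using r by simp
    then show ?thesis using 3 r unfolding Cmat_def by auto
  qed
qed

lemma sum_upd:
  assumes r0: "r0 \<in> {1..2*m}"
  shows "(\<Sum>s=1..2*m. C r s * (v(r0:=x)) s) = (\<Sum>s=1..2*m. C r s * v s) + C r r0 * (x - v r0)"
proof -
  have "(\<Sum>s=1..2*m. C r s * (v(r0:=x)) s) = (\<Sum>s=1..2*m. C r s * v s + (if s = r0 then C r r0 * (x - v r0) else 0))"
    by (rule sum.cong) (auto simp: algebra_simps)
  also have "\<dots> = (\<Sum>s=1..2*m. C r s * v s) + (\<Sum>s=1..2*m. (if s = r0 then C r r0 * (x - v r0) else 0))"
    by (rule sum.distrib)
  also have "(\<Sum>s=1..2*m. (if s = r0 then C r r0 * (x - v r0) else 0)) = C r r0 * (x - v r0)"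
    using r0 by (simp add: sum.delta)
  finally show ?thesis .
qed

lemma sum_zero_fun: "(\<Sum>s=1..2*m. C r s * (0::real)) = 0" by simp

lemma ev_exists:
  assumes i: "1 \<le> i" "i \<le> 2*m"
  shows "\<exists>v. EV i v"
proof -
  let ?p = "2*m+1-i"
  have main: "\<exists>v. (\<forall>r. v r \<noteq> 0 \<longrightarrow> ?p \<le> r \<and> r \<le> n) \<and> (?p \<le> n \<longrightarrow> v ?p = 1)
       \<and> (\<forall>r\<in>{1..n}. (\<Sum>s=1..2*m. C r s * v s) = c i * v r)" if "n \<le> 2*m" for n
    using that
  proof (induction n)
    case 0
    have "?p \<ge> 1" using i by simp
    then show ?case by (intro exI[of _ "\<lambda>_. 0"]) auto
  next
    case (Suc n)
    then obtain v where sup: "\<forall>r. v r \<noteq> 0 \<longrightarrow> ?p \<le> r \<and> r \<le> n" and one: "?p \<le> n \<longrightarrow> v ?p = 1"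
      and rows: "\<forall>r\<in>{1..n}. (\<Sum>s=1..2*m. C r s * v s) = c i * v r" by auto
    define r0 where "r0 = Suc n"
    have r0r: "r0 \<in> {1..2*m}" using Suc.prems r0_def by simp
    define A where "A = (\<Sum>s=1..2*m. C r0 s * v s)"
    define x where "x = (if r0 < ?p then 0 else if r0 = ?p then 1 else A / (c i - c (2*m+1-r0)))"
    define v' where "v' = v(r0 := x)"
    have vr0: "v r0 = 0" using sup r0_def by force
    have sup': "\<forall>r. v' r \<noteq> 0 \<longrightarrow> ?p \<le> r \<and> r \<le> Suc n"
      using sup unfolding v'_def x_def r0_def by auto
    have one': "?p \<le> Suc n \<longrightarrow> v' ?p = 1"
      using one unfolding v'_def x_def r0_def by auto
    have rows': "\<forall>r\<in>{1..Suc n}. (\<Sum>s=1..2*m. C r s * v' s) = c i * v' r"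
    proof
      fix r assume r: "r \<in> {1..Suc n}"
      have eq: "(\<Sum>s=1..2*m. C r s * v' s) = (\<Sum>s=1..2*m. C r s * v s) + C r r0 * x"
        unfolding v'_def using sum_upd[OF r0r, of r v x] vr0 by simp
      show "(\<Sum>s=1..2*m. C r s * v' s) = c i * v' r"
      proof (cases "r = r0")
        case False
        then have "r \<in> {1..n}" "r < r0" using r r0_def by auto
        then show ?thesis using eq rows C_upper[of r r0] False unfolding v'_def by auto
      next
        case True
        have cd: "C r0 r0 = c (2*m+1-r0)" using C_diag r0r by auto
        show ?thesis
        proof (cases "r0 \<le> ?p")
          case le: True
          have "v = (\<lambda>_. 0)" using sup le r0_def by force
          then have A0: "A = 0" unfolding A_def by simp
          show ?thesis
          proof (cases "r0 = ?p")
            case True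
            then have ci: "2*m+1-r0 = i" using i by simp
            have x1: "x = 1" using True unfolding x_def by simp
            have "v' r = 1" using x1 \<open>r = r0\<close> unfolding v'_def by simp
            then show ?thesis using eq A0 cd ci x1 \<open>r = r0\<close> unfolding A_def by simp
          next
            case False
            have x0: "x = 0" using le False unfolding x_def by simp
            have "v' r = 0" using x0 \<open>r = r0\<close> unfolding v'_def by simp
            then show ?thesis using eq A0 x0 \<open>r = r0\<close> unfolding A_def by simp
          qed
        next
          case gt: False
          have ne: "c i - c (2*m+1-r0) \<noteq> 0" using cdist[of i "2*m+1-r0"] gt i r0r by auto
          have xx: "x = A / (c i - c (2*m+1-r0))" using gt unfolding x_def by auto
          have "A + c (2*m+1-r0) * x = c i * x" using ne unfolding xx by (simp add: field_simps)
          moreover have "v' r = x" using \<open>r = r0\<close> unfolding v'_def by simp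
          ultimately show ?thesis using eq cd \<open>r = r0\<close> unfolding A_def by simp
        qed
      qed
    qed
    show ?case using sup' one' rows' by blast
  qed
  obtain v where sup: "\<forall>r. v r \<noteq> 0 \<longrightarrow> ?p \<le> r \<and> r \<le> 2*m" and one: "?p \<le> 2*m \<longrightarrow> v ?p = 1"
      and rows: "\<forall>r\<in>{1..2*m}. (\<Sum>s=1..2*m. C r s * v s) = c i * v r" using main[of "2*m"] by auto
  have "v \<in> Vsp m" unfolding Vsp_def using sup i by force
  moreover have "\<forall>r\<in>{1..2*m-i}. v r = 0" using sup by force
  moreover have "v ?p = 1" using one i by simp
  ultimately show ?thesis unfolding EV_def using rows by blast
qed

lemma ev_unique:
  assumes i: "1 \<le> i" "i \<le> 2*m" and v: "EV i v" and w: "EV i w"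
  shows "v = w"
proof -
  have "v r = w r" for r
  proof (induction r rule: less_induct)
    case (less r)
    show ?case
    proof (cases "r \<in> {1..2*m}")
      case False
      then show ?thesis using v w unfolding EV_def Vsp_def by auto
    next
      case rr: True
      show ?thesis
      proof (cases "r \<le> 2*m+1-i")
        case True
        then show ?thesis using v w rr unfolding EV_def by (cases "r = 2*m+1-i") auto
      next
        case False
        have rv: "(\<Sum>s=1..2*m. C r s * v s) = c i * v r" and rw: "(\<Sum>s=1..2*m. C r s * w s) = c i * w r"
          using v w rr unfolding EV_def by auto
        have sv: "(\<Sum>s=1..2*m. C r s * v s) = C r r * v r + (\<Sum>s\<in>{1..2*m}-{r}. C r s * v s)"
          using rr by (simp add: sum.remove)
        have sw: "(\<Sum>s=1..2*m. C r s * w s) = C r r * w r + (\<Sum>s\<in>{1..2*m}-{r}. C r s * w s)"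
          using rr by (simp add: sum.remove)
        have "(\<Sum>s\<in>{1..2*m}-{r}. C r s * v s) = (\<Sum>s\<in>{1..2*m}-{r}. C r s * w s)"
        proof (rule sum.cong)
          fix s assume s: "s \<in> {1..2*m}-{r}"
          show "C r s * v s = C r s * w s"
          proof (cases "s < r")
            case True then show ?thesis using less by simp
          next
            case False then show ?thesis using s C_upper[of r s] by simp
          qed
        qed simp
        then have "(C r r - c i) * (v r - w r) = 0" using rv rw sv sw by (simp add: algebra_simps)
        moreover have "C r r - c i \<noteq> 0" using C_diag[of r] rr cdist[of "2*m+1-r" i] False i by auto
        ultimately show ?thesis by simp
      qed
    qed
  qed
  then show ?thesis by blast
qed

lemma V_EV: "1 \<le> i \<Longrightarrow> i \<le> 2*m \<Longrightarrow> EV i (V i)"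
proof -
  assume i: "1 \<le> i" "i \<le> 2*m"
  have "\<exists>!v. EV i v" using ev_exists[OF i] ev_unique[OF i] by blast
  then have "EV i (THE v. EV i v)" by (rule theI')
  moreover have "(THE v. EV i v) = V i" unfolding evec_def EV_def by simp
  ultimately show ?thesis by simp
qed

lemma V_Vsp: "1 \<le> i \<Longrightarrow> i \<le> 2*m \<Longrightarrow> V i \<in> Vsp m" using V_EV unfolding EV_def by blast
lemma V_zero: "1 \<le> i \<Longrightarrow> i \<le> 2*m \<Longrightarrow> 1 \<le> r \<Longrightarrow> r \<le> 2*m - i \<Longrightarrow> V i r = 0" using V_EV unfolding EV_def by auto
lemma V_one: "1 \<le> i \<Longrightarrow> i \<le> 2*m \<Longrightarrow> V i (2*m+1-i) = 1" using V_EV unfolding EV_def by blast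

end


locale la2 = la +
  fixes B :: "(nat \<Rightarrow> real) \<Rightarrow> (nat \<Rightarrow> real) \<Rightarrow> real"
  assumes hB: "is_the_form m a1 a2 b2 b3 c B"
begin

lemma bil: "x \<in> Vsp m \<Longrightarrow> y \<in> Vsp m \<Longrightarrow> z \<in> Vsp m \<Longrightarrow>
    B (\<lambda>k. s * x k + t * y k) z = s * B x z + t * B y z \<and> B z (\<lambda>k. s * x k + t * y k) = s * B z x + t * B z y"
  using hB unfolding is_the_form_def by blast

lemma Bvv: "i \<in> {1..2*m} \<Longrightarrow> j \<in> {1..2*m} \<Longrightarrow> B (V i) (V j) = (if i = j then dval m a1 a2 b2 b3 c i else 0)"
  using hB unfolding is_the_form_def by blast

lemma comb_Vsp: "I \<subseteq> {1..2*m} \<Longrightarrow> (\<lambda>k. \<Sum>i\<in>I. al i * V i k) \<in> Vsp m"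
proof -
  assume I: "I \<subseteq> {1..2*m}"
  have "(\<Sum>i\<in>I. al i * V i k) = 0" if "k \<notin> {1..2*m}" for k
  proof (rule sum.neutral, rule ballI)
    fix i assume "i \<in> I"
    then have "V i \<in> Vsp m" using I V_Vsp by auto
    then show "al i * V i k = 0" using that unfolding Vsp_def by auto
  qed
  then show ?thesis unfolding Vsp_def by auto
qed

lemma lin:
  assumes fin: "finite I" and I: "I \<subseteq> {1..2*m}" and z: "z \<in> Vsp m"
  shows "B (\<lambda>k. \<Sum>i\<in>I. al i * V i k) z = (\<Sum>i\<in>I. al i * B (V i) z)
       \<and> B z (\<lambda>k. \<Sum>i\<in>I. al i * V i k) = (\<Sum>i\<in>I. al i * B z (V i))"
  using fin I
proof (induction I rule: finite_induct)
  case empty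
  have "(\<lambda>k. 0 * z k + 0 * z k) = (\<lambda>k. 0::real)" by simp
  then show ?case using bil[OF z z z, of 0 0] by simp
next
  case (insert j I)
  have j: "V j \<in> Vsp m" using insert V_Vsp by auto
  have Iv: "(\<lambda>k. \<Sum>i\<in>I. al i * V i k) \<in> Vsp m" using comb_Vsp insert by auto
  have eq: "(\<lambda>k. \<Sum>i\<in>insert j I. al i * V i k) = (\<lambda>k. al j * V j k + 1 * (\<Sum>i\<in>I. al i * V i k))"
    using insert by simp
  show ?case unfolding eq using bil[OF j Iv z, of "al j" 1] insert by simp
qed

lemma span:
  assumes x: "x \<in> Vsp m"
  shows "\<exists>al. x = (\<lambda>k. \<Sum>i=1..2*m. al i * V i k)"
proof -
  have "\<forall>x\<in>Vsp m. (\<forall>t. 1 \<le> t \<longrightarrow> t \<le> 2*m - r \<longrightarrow> x t = 0) \<longrightarrow> (\<exists>al. x = (\<lambda>k. \<Sum>i=1..r. al i * V i k))"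
    if "r \<le> 2*m" for r
    using that
  proof (induction r)
    case 0
    show ?case
    proof (intro ballI impI)
      fix x assume x: "x \<in> Vsp m" and z: "\<forall>t. 1 \<le> t \<longrightarrow> t \<le> 2*m - 0 \<longrightarrow> x t = 0"
      have "x = (\<lambda>k. 0)"
      proof
        fix k show "x k = 0" using x z unfolding Vsp_def by (cases "k \<in> {1..2*m}") auto
      qed
      then show "\<exists>al. x = (\<lambda>k. \<Sum>i=1..0. al i * V i k)" by simp
    qed
  next
    case (Suc r)
    show ?case
    proof (intro ballI impI)
      fix x assume x: "x \<in> Vsp m" and z: "\<forall>t. 1 \<le> t \<longrightarrow> t \<le> 2*m - Suc r \<longrightarrow> x t = 0"
      define a where "a = x (2*m - r)"
      have r1: "1 \<le> Suc r" "Suc r \<le> 2*m" using Suc.prems by auto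
      have VS: "V (Suc r) \<in> Vsp m" using V_Vsp r1 by blast
      define x' where "x' = (\<lambda>k. x k - a * V (Suc r) k)"
      have x'V: "x' \<in> Vsp m" using x VS unfolding Vsp_def x'_def by auto
      have z': "\<forall>t. 1 \<le> t \<longrightarrow> t \<le> 2*m - r \<longrightarrow> x' t = 0"
      proof (intro allI impI)
        fix t assume t: "1 \<le> t" "t \<le> 2*m - r"
        show "x' t = 0"
        proof (cases "t \<le> 2*m - Suc r")
          case True
          then show ?thesis using z t V_zero[OF r1, of t] unfolding x'_def by simp
        next
          case False
          then have "t = 2*m - r" using t by simp
          moreover have "V (Suc r) (2*m+1 - Suc r) = 1" using V_one r1 by blast
          moreover have "2*m+1 - Suc r = 2*m - r" by simp
          ultimately show ?thesis unfolding x'_def a_def by simp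
        qed
      qed
      obtain al where al: "x' = (\<lambda>k. \<Sum>i=1..r. al i * V i k)" using Suc.IH Suc.prems x'V z' by auto
      define al' where "al' = al(Suc r := a)"
      have "x = (\<lambda>k. \<Sum>i=1..Suc r. al' i * V i k)"
      proof
        fix k
        have "(\<Sum>i=1..Suc r. al' i * V i k) = (\<Sum>i=1..r. al' i * V i k) + al' (Suc r) * V (Suc r) k"
          by simp
        also have "(\<Sum>i=1..r. al' i * V i k) = (\<Sum>i=1..r. al i * V i k)"
          unfolding al'_def by (rule sum.cong) auto
        also have "\<dots> = x' k" using al by simp
        finally show "x k = (\<Sum>i=1..Suc r. al' i * V i k)" unfolding x'_def al'_def by simp
      qed
      then show "\<exists>al. x = (\<lambda>k. \<Sum>i=1..Suc r. al i * V i k)" by blast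
    qed
  qed
  then show ?thesis using x by auto
qed

lemma quad:
  "B (\<lambda>k. \<Sum>i=1..2*m. al i * V i k) (\<lambda>k. \<Sum>i=1..2*m. al i * V i k)
     = (\<Sum>i=1..2*m. al i * al i * dval m a1 a2 b2 b3 c i)"
proof -
  let ?x = "(\<lambda>k. \<Sum>i=1..2*m. al i * V i k)"
  have xV: "?x \<in> Vsp m" using comb_Vsp by auto
  have "B ?x ?x = (\<Sum>i=1..2*m. al i * B (V i) ?x)" using lin[OF _ _ xV, of "{1..2*m}" al] by simp
  also have "\<dots> = (\<Sum>i=1..2*m. al i * al i * dval m a1 a2 b2 b3 c i)"
  proof (rule sum.cong)
    fix i assume i: "i \<in> {1..2*m}"
    have "B (V i) ?x = (\<Sum>j=1..2*m. al j * B (V i) (V j))"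
      using lin[of "{1..2*m}" "V i" al] V_Vsp i by auto
    also have "\<dots> = (\<Sum>j=1..2*m. (if i = j then al i * dval m a1 a2 b2 b3 c i else 0))"
      by (rule sum.cong) (use i Bvv in auto)
    also have "\<dots> = al i * dval m a1 a2 b2 b3 c i" using i by (simp add: sum.delta)
    finally show "al i * B (V i) ?x = al i * al i * dval m a1 a2 b2 b3 c i" by simp
  qed simp
  finally show ?thesis .
qed

lemma posdef_iff: "pos_def_on m (\<lambda>x y. \<epsilon> * B x y) \<longleftrightarrow> (\<forall>i\<in>{1..2*m}. \<epsilon> * dval m a1 a2 b2 b3 c i > 0)"
proof
  assume p: "pos_def_on m (\<lambda>x y. \<epsilon> * B x y)"
  show "\<forall>i\<in>{1..2*m}. \<epsilon> * dval m a1 a2 b2 b3 c i > 0"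
  proof
    fix i assume i: "i \<in> {1..2*m}"
    have VS: "V i \<in> Vsp m" using V_Vsp i by auto
    have "V i (2*m+1-i) = 1" using V_one i by auto
    then have "V i \<noteq> (\<lambda>_. 0)" by (metis zero_neq_one)
    then have "\<epsilon> * B (V i) (V i) > 0" using p VS unfolding pos_def_on_def by blast
    then show "\<epsilon> * dval m a1 a2 b2 b3 c i > 0" using Bvv[OF i i] by simp
  qed
next
  assume h: "\<forall>i\<in>{1..2*m}. \<epsilon> * dval m a1 a2 b2 b3 c i > 0"
  show "pos_def_on m (\<lambda>x y. \<epsilon> * B x y)" unfolding pos_def_on_def
  proof (intro ballI impI)
    fix x assume x: "x \<in> Vsp m" and nz: "x \<noteq> (\<lambda>_. 0)"
    obtain al where al: "x = (\<lambda>k. \<Sum>i=1..2*m. al i * V i k)" using span[OF x] by blast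
    have "\<exists>j\<in>{1..2*m}. al j \<noteq> 0"
    proof (rule ccontr)
      assume "\<not> ?thesis"
      then have "x = (\<lambda>_. 0)" unfolding al by auto
      then show False using nz by simp
    qed
    then obtain j where j: "j \<in> {1..2*m}" "al j \<noteq> 0" by blast
    have "\<epsilon> * B x x = (\<Sum>i=1..2*m. al i * al i * (\<epsilon> * dval m a1 a2 b2 b3 c i))"
      unfolding al quad by (simp add: sum_distrib_left algebra_simps)
    also have "\<dots> > 0"
    proof (rule sum_pos2[OF _ j(1)])
      have "al j * al j > 0" using j(2) by (cases "al j > 0") (auto simp: mult_neg_neg)
      moreover have "\<epsilon> * dval m a1 a2 b2 b3 c j > 0" using h j(1) by blast
      ultimately show "0 < al j * al j * (\<epsilon> * dval m a1 a2 b2 b3 c j)" by simp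
      show "\<And>i. i \<in> {1..2*m} \<Longrightarrow> 0 \<le> al i * al i * (\<epsilon> * dval m a1 a2 b2 b3 c i)"
      proof -
        fix i assume "i \<in> {1..2*m}"
        then have "\<epsilon> * dval m a1 a2 b2 b3 c i > 0" using h by blast
        then show "0 \<le> al i * al i * (\<epsilon> * dval m a1 a2 b2 b3 c i)" by (rule mult_nonneg_nonneg[OF zero_le_square less_imp_le])
      qed
    qed simp
    finally show "\<epsilon> * B x x > 0" .
  qed
qed

end


lemma div_sgn: "(x::real) / sgn y = x * sgn y"
  by (cases "y < 0"; cases "y = 0") (auto simp: sgn_if)

lemma neg1_inv: "(1::real) / (-1) ^ n = (-1) ^ n"
  by (cases "even n") auto

lemma dval_sgn:
  assumes cdec: "\<And>k l. 1 \<le> k \<Longrightarrow> k < l \<Longrightarrow> l \<le> 2*m \<Longrightarrow> c l < c k"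
    and i: "1 \<le> i" "i \<le> 2*m"
  shows "sgn (dval m a1 a2 b2 b3 c i) = (-1)^(i-1) * (\<Prod>k\<in>{1..2*m}-{i}. sgn (qq a1 a2 b2 b3 c i k))
           * sgn (p31 a1 b3 c i) * sgn (p32 a2 b3 c i)"
proof -
  define X1 where "X1 = (\<Prod>k\<in>{i+1..2*m}. (c i - c k))"
  define X2 where "X2 = (\<Prod>k\<in>{1..i-1}. (c i - c k))"
  define Y1 where "Y1 = (\<Prod>k\<in>{2*m+1-i..2*m} - {i}. qq a1 a2 b2 b3 c i k)"
  define Y2 where "Y2 = (\<Prod>k\<in>{1..2*m-i} - {i}. qq a1 a2 b2 b3 c i k)"
  define Z where "Z = (if i \<le> m then p31 a1 b3 c i / p32 a2 b3 c i else p31 a1 b3 c i * p32 a2 b3 c i)"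
  have dv: "dval m a1 a2 b2 b3 c i = X1 / X2 * (Y1 / Y2) * Z"
    unfolding dval_def X1_def X2_def Y1_def Y2_def Z_def by simp
  have "X1 > 0" unfolding X1_def by (rule prod_pos) (use cdec i in auto)
  then have sX1: "sgn X1 = 1" by simp
  have "sgn X2 = (\<Prod>k\<in>{1..i-1}. sgn (c i - c k))" unfolding X2_def by (rule sgn_prod_real) simp
  also have "\<dots> = (\<Prod>k\<in>{1..i-1}. -1)"
  proof (rule prod.cong)
    fix k assume "k \<in> {1..i-1}"
    then have "c i < c k" using cdec[of k i] i by auto
    then show "sgn (c i - c k) = -1" by simp
  qed simp
  finally have sX2: "sgn X2 = (-1) ^ (i-1)" by simp
  have un: "({2*m+1-i..2*m} - {i}) \<union> ({1..2*m-i} - {i}) = {1..2*m} - {i}" using i by auto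
  have dj: "({2*m+1-i..2*m} - {i}) \<inter> ({1..2*m-i} - {i}) = {}" by auto
  have "sgn Y1 * sgn Y2 = (\<Prod>k\<in>{2*m+1-i..2*m} - {i}. sgn (qq a1 a2 b2 b3 c i k)) * (\<Prod>k\<in>{1..2*m-i} - {i}. sgn (qq a1 a2 b2 b3 c i k))"
    unfolding Y1_def Y2_def by (simp add: sgn_prod_real)
  also have "\<dots> = (\<Prod>k\<in>{1..2*m}-{i}. sgn (qq a1 a2 b2 b3 c i k))"
    unfolding un[symmetric] by (rule prod.union_disjoint[symmetric]) (use dj in auto)
  finally have sY: "sgn Y1 * sgn Y2 = (\<Prod>k\<in>{1..2*m}-{i}. sgn (qq a1 a2 b2 b3 c i k))" .
  have sZ: "sgn Z = sgn (p31 a1 b3 c i) * sgn (p32 a2 b3 c i)"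
    unfolding Z_def by (simp add: sgn_mult div_sgn)
  have a: "sgn (X1/X2) = sgn X1 * sgn X2" by (simp only: sgn_divide div_sgn)
  have b: "sgn (Y1/Y2) = sgn Y1 * sgn Y2" by (simp only: sgn_divide div_sgn)
  have "sgn (dval m a1 a2 b2 b3 c i) = sgn (X1/X2) * sgn (Y1/Y2) * sgn Z"
    unfolding dv by (simp only: sgn_mult)
  also have "\<dots> = (-1)^(i-1) * (sgn Y1 * sgn Y2) * sgn Z" unfolding a b sX1 sX2 by simp
  finally show ?thesis unfolding sY sZ by simp
qed



theorem theorem2p14:
  fixes m :: nat and a1 a2 b1 b2 b3 :: real and c :: "nat \<Rightarrow> real"
    and B :: "(nat \<Rightarrow> real) \<Rightarrow> (nat \<Rightarrow> real) \<Rightarrow> real"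
  assumes hm: "m \<ge> 2"
    and ha: "a1 > a2"
    and hb: "b1 \<noteq> b2" "b1 \<noteq> b3" "b2 \<noteq> b3"
    and hc: "\<forall>i\<in>{1..<2*m}. c i > c (i+1)"
    and hsum: "real m * a1 + real m * a2
               = b1 + (real m - 1) * b2 + real m * b3 + (\<Sum>i=1..2*m. c i)"
    and hwd: "form_well_defined m a1 a2 b2 b3 c"
    and hB: "is_the_form m a1 a2 b2 b3 c B"
  shows "(sign_definite m B \<longleftrightarrow>
            (ord1 b1 b2 b3 \<and> rest1 m a1 a2 b2 b3 c)
          \<or> (ord2 b1 b2 b3 \<and> rest2 m a1 a2 b2 b3 c)
          \<or> (ord3 b1 b2 b3 \<and> rest3 m a1 a2 b2 b3 c)
          \<or> (ord4 b1 b2 b3 \<and> rest4 m a1 a2 b2 b3 c)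
          \<or> (ord5 b1 b2 b3 \<and> rest5 m a1 a2 b2 b3 c)
          \<or> (ord6 b1 b2 b3 \<and> rest6 m a1 a2 b2 b3 c))
       \<and> (\<forall>\<epsilon>::real\<in>{1, -1}. pos_def_on m (\<lambda>x y. \<epsilon> * B x y)
             \<longrightarrow> \<epsilon> = sgn ((b1 - b2) * (b1 - b3)))
       \<and> (rest1 m a1 a2 b2 b3 c \<longrightarrow> ord1 b1 b2 b3)
       \<and> (rest2 m a1 a2 b2 b3 c \<longrightarrow> ord2 b1 b2 b3)
       \<and> (rest3 m a1 a2 b2 b3 c \<longrightarrow> ord3 b1 b2 b3)
       \<and> (rest4 m a1 a2 b2 b3 c \<longrightarrow> ord4 b1 b2 b3)
       \<and> (rest5 m a1 a2 b2 b3 c \<longrightarrow> ord5 b1 b2 b3)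
       \<and> (rest6 m a1 a2 b2 b3 c \<longrightarrow> ord6 b1 b2 b3)"
proof -
  define s0 where "s0 = b2 + b3 - a1 - a2"
  define e where "e = (\<lambda>i. c i + s0/2)"
  define u where "u = a1 - b3 + s0/2"
  define w where "w = a2 - b3 + s0/2"
  interpret C: cfg m e u w
  proof
    show "2 \<le> m" by (rule hm)
    show "\<And>i. 1 \<le> i \<Longrightarrow> i < 2*m \<Longrightarrow> e (i+1) < e i" using hc unfolding e_def by auto
    show "w < u" using ha unfolding u_def w_def by simp
  qed
  have cdec: "\<And>k l. 1 \<le> k \<Longrightarrow> k < l \<Longrightarrow> l \<le> 2*m \<Longrightarrow> c l < c k"
    using C.mono_lt unfolding e_def by simp
  interpret L: la2 m a1 a2 b2 b3 c B
  proof
    show "\<And>k l. 1 \<le> k \<Longrightarrow> k \<le> 2*m \<Longrightarrow> 1 \<le> l \<Longrightarrow> l \<le> 2*m \<Longrightarrow> k \<noteq> l \<Longrightarrow> c k \<noteq> c l"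
      using cdec by (metis less_irrefl linorder_neqE_nat)
    show "is_the_form m a1 a2 b2 b3 c B" by (rule hB)
  qed
  have qq_id: "\<And>i k. qq a1 a2 b2 b3 c i k = e i + e k" unfolding qq_def e_def s0_def by simp
  have p31_id: "\<And>i. p31 a1 b3 c i = e i - u" unfolding p31_def e_def u_def by simp
  have p32_id: "\<And>i. p32 a2 b3 c i = e i - w" unfolding p32_def e_def w_def by simp
  have sgn_sig: "sgn (dval m a1 a2 b2 b3 c i) = C.sig i" if "i \<in> {1..2*m}" for i
  proof -
    have ii: "1 \<le> i" "i \<le> 2*m" using that by auto
    show ?thesis using dval_sgn[where m=m and c=c and i=i, OF cdec ii]
      by (simp add: C.sig_def qq_id p31_id p32_id)
  qed
  have r1: "rest1 m a1 a2 b2 b3 c = C.sys1" unfolding rest1_def C.sys1_def qq_id p31_id p32_id ..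
  have r2: "rest2 m a1 a2 b2 b3 c = C.sys2" unfolding rest2_def C.sys2_def qq_id p31_id p32_id ..
  have r3: "rest3 m a1 a2 b2 b3 c = C.sys3" unfolding rest3_def C.sys3_def qq_id p31_id p32_id ..
  have r4: "rest4 m a1 a2 b2 b3 c = C.sys4" unfolding rest4_def C.sys4_def qq_id p31_id p32_id ..
  have r5: "rest5 m a1 a2 b2 b3 c = C.sys5" unfolding rest5_def C.sys5_def qq_id p31_id p32_id ..
  have r6: "rest6 m a1 a2 b2 b3 c = C.sys6" unfolding rest6_def C.sys6_def qq_id p31_id p32_id ..
  define E where "E = (\<Sum>i=1..2*m. e i)"
  have Esum: "E = (\<Sum>i=1..2*m. c i) + real m * s0"
    unfolding E_def e_def by (simp add: sum.distrib)
  have ms0: "real m * s0 = real m * b2 + real m * b3 - real m * a1 - real m * a2"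
    unfolding s0_def by (simp add: algebra_simps)
  have b1eq: "b1 = b2 - E" using hsum Esum ms0 by (simp add: algebra_simps)
  have b3eq: "b3 = b2 - (u + w)" unfolding u_def w_def s0_def by simp
  have o1: "C.sys1 \<Longrightarrow> ord1 b1 b2 b3" using C.ord_sys1 b1eq b3eq unfolding ord1_def E_def by auto
  have o2: "C.sys2 \<Longrightarrow> ord2 b1 b2 b3" using C.ord_sys2 b1eq b3eq unfolding ord2_def E_def by auto
  have o3: "C.sys3 \<Longrightarrow> ord3 b1 b2 b3" using C.ord_sys3 b1eq b3eq unfolding ord3_def E_def by auto
  have o4: "C.sys4 \<Longrightarrow> ord4 b1 b2 b3" using C.ord_sys4 b1eq b3eq unfolding ord4_def E_def by auto
  have o5: "C.sys5 \<Longrightarrow> ord5 b1 b2 b3" using C.ord_sys5 b1eq b3eq unfolding ord5_def E_def by auto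
  have o6: "C.sys6 \<Longrightarrow> ord6 b1 b2 b3" using C.ord_sys6 b1eq b3eq unfolding ord6_def E_def by auto
  have pd_eps: "pos_def_on m (\<lambda>x y. eps * B x y) \<longleftrightarrow> (\<forall>i\<in>{1..2*m}. C.sig i = eps)"
    if eps: "eps = 1 \<or> eps = -1" for eps
  proof -
    have "pos_def_on m (\<lambda>x y. eps * B x y) \<longleftrightarrow> (\<forall>i\<in>{1..2*m}. eps * dval m a1 a2 b2 b3 c i > 0)"
      by (rule L.posdef_iff)
    also have "\<dots> \<longleftrightarrow> (\<forall>i\<in>{1..2*m}. C.sig i = eps)"
      using eps sgn_sig by (auto simp: sgn_1_pos sgn_1_neg)
    finally show ?thesis .
  qed
  have pB: "pos_def_on m B = pos_def_on m (\<lambda>x y. 1 * B x y)" by simp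
  have nB: "pos_def_on m (\<lambda>x y. - B x y) = pos_def_on m (\<lambda>x y. (-1) * B x y)" by simp
  have sd: "sign_definite m B \<longleftrightarrow> (\<forall>i\<in>{1..2*m}. C.sig i = 1) \<or> (\<forall>i\<in>{1..2*m}. C.sig i = -1)"
    unfolding sign_definite_def pB nB using pd_eps[of 1] pd_eps[of "-1"] by simp
  have sgn_pos_case: "sgn ((b1 - b2) * (b1 - b3)) = 1" if "C.sys1 \<or> C.sys2 \<or> C.sys4 \<or> C.sys5"
  proof -
    have "(b1 - b2) * (b1 - b3) > 0"
      using that o1 o2 o4 o5 unfolding ord1_def ord2_def ord4_def ord5_def
      by (auto simp: zero_less_mult_iff)
    then show ?thesis by simp
  qed
  have sgn_neg_case: "sgn ((b1 - b2) * (b1 - b3)) = -1" if "C.sys3 \<or> C.sys6"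
  proof -
    have "(b1 - b2) * (b1 - b3) < 0"
      using that o3 o6 unfolding ord3_def ord6_def
      by (auto simp: mult_less_0_iff)
    then show ?thesis by simp
  qed
  have part1: "sign_definite m B \<longleftrightarrow>
            (ord1 b1 b2 b3 \<and> rest1 m a1 a2 b2 b3 c)
          \<or> (ord2 b1 b2 b3 \<and> rest2 m a1 a2 b2 b3 c)
          \<or> (ord3 b1 b2 b3 \<and> rest3 m a1 a2 b2 b3 c)
          \<or> (ord4 b1 b2 b3 \<and> rest4 m a1 a2 b2 b3 c)
          \<or> (ord5 b1 b2 b3 \<and> rest5 m a1 a2 b2 b3 c)
          \<or> (ord6 b1 b2 b3 \<and> rest6 m a1 a2 b2 b3 c)"
    unfolding r1 r2 r3 r4 r5 r6
  proof
    assume "sign_definite m B"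
    then have "(\<forall>i\<in>{1..2*m}. C.sig i = 1) \<or> (\<forall>i\<in>{1..2*m}. C.sig i = -1)" using sd by simp
    then have "C.sys1 \<or> C.sys2 \<or> C.sys3 \<or> C.sys4 \<or> C.sys5 \<or> C.sys6"
      using C.comb_eps[of 1] C.comb_eps[of "-1"] by auto
    then show "(ord1 b1 b2 b3 \<and> C.sys1) \<or> (ord2 b1 b2 b3 \<and> C.sys2) \<or> (ord3 b1 b2 b3 \<and> C.sys3)
          \<or> (ord4 b1 b2 b3 \<and> C.sys4) \<or> (ord5 b1 b2 b3 \<and> C.sys5) \<or> (ord6 b1 b2 b3 \<and> C.sys6)"
      using o1 o2 o3 o4 o5 o6 by blast
  next
    assume "(ord1 b1 b2 b3 \<and> C.sys1) \<or> (ord2 b1 b2 b3 \<and> C.sys2) \<or> (ord3 b1 b2 b3 \<and> C.sys3)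
          \<or> (ord4 b1 b2 b3 \<and> C.sys4) \<or> (ord5 b1 b2 b3 \<and> C.sys5) \<or> (ord6 b1 b2 b3 \<and> C.sys6)"
    then have "(\<forall>i\<in>{1..2*m}. C.sig i = 1) \<or> (\<forall>i\<in>{1..2*m}. C.sig i = -1)"
      using C.back1 C.back2 C.back3 C.back4 C.back5 C.back6 by blast
    then show "sign_definite m B" using sd by simp
  qed
  have part2: "\<forall>\<epsilon>::real\<in>{1, -1}. pos_def_on m (\<lambda>x y. \<epsilon> * B x y) \<longrightarrow> \<epsilon> = sgn ((b1 - b2) * (b1 - b3))"
  proof (intro ballI impI)
    fix eps :: real assume eps: "eps \<in> {1, -1}" and p: "pos_def_on m (\<lambda>x y. eps * B x y)"
    have eps': "eps = 1 \<or> eps = -1" using eps by auto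
    have "\<forall>i\<in>{1..2*m}. C.sig i = eps" using pd_eps[OF eps'] p by simp
    then have "(eps = 1 \<and> (C.sys1 \<or> C.sys2 \<or> C.sys4 \<or> C.sys5)) \<or> (eps = -1 \<and> (C.sys3 \<or> C.sys6))"
      using C.comb_eps eps' by blast
    then show "eps = sgn ((b1 - b2) * (b1 - b3))" using sgn_pos_case sgn_neg_case by auto
  qed
  show ?thesis using part1 part2 o1 o2 o3 o4 o5 o6 unfolding r1 r2 r3 r4 r5 r6 by blast
qed



end
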